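(* Let $A$ be a selfadjoint operator on a separable infinite-dimensional Hilbert space $\mathcal{H}$, and let $\mathcal{L}$ be either an $A$-regular Galerkin sequence or, if $A\ge0$, an $A^{1/2}$-regular Galerkin sequence. Then (i) $\sigma(A,\mathcal{L})$ and $\sigma_{\rm ess}(A,\mathcal{L})$ are closed subsets of $\mathbb{R}$; (ii) $\sigma_{\rm ess}(A)\subset\sigma_{\rm ess}(A,\mathcal{L})$ and $\sigma_{\rm disc}(A,\mathcal{L})\subset\sigma_{\rm disc}(A)$.
   Context: A sequence $\mathcal{L}=(\mathcal{L}_n)$ of finite-dimensional subspaces $\mathcal{L}_n\subset\operatorname{D}(A)$ is $A$-regular if for every $f\in\operatorname{D}(A)$ there exist $f_n\in\mathcal{L}_n$ with $\|f_n-f\|+\|Af_n-Af\|\to0$; then $A_n=\pi_nA|_{\mathcal{L}_n}$, $\pi_n$ the orthogonal projection onto $\mathcal{L}_n$. If $A\ge0$, finite-dimensional $\mathcal{L}_n\subset\operatorname{D}(A^{1/2})$ form an $A^{1/2}$-regular sequence if every $f\in\operatorname{D}(A^{1/2})$ is the limit of some $f_n\in\mathcal{L}_n$ in the norm $\|\cdot\|+\|A^{1/2}\cdot\|$; then $A_n:\mathcal{L}_n\to\mathcal{L}_n$ is defined by $\langle y,A_nx\rangle=\langle A^{1/2}y,A^{1/2}x\rangle$. Write $\pi_n(A-\lambda)x:=A_nx-\lambda x$ for $x\in\mathcal{L}_n$. The limiting spectrum $\sigma(A,\mathcal{L})$ is the set of $\lambda\in\mathbb{R}$ such that there exist $n_k\to\infty$,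 $\lambda_k\in\sigma(A_{n_k})$, $\lambda_k\to\lambda$. The limiting essential spectrum $\sigma_{\rm ess}(A,\mathcal{L})$ is the set of $\lambda\in\mathbb{R}$ such that there exist $n_k\to\infty$ and $x_k\in\mathcal{L}_{n_k}$ with $\|x_k\|=1$, $x_k\rightharpoonup0$ weakly, $\pi_{n_k}(A-\lambda)x_k\to0$. The limiting discrete spectrum is $\sigma_{\rm disc}(A,\mathcal{L})=\sigma(A,\mathcal{L})\setminus\sigma_{\rm ess}(A,\mathcal{L})$. $\sigma_{\rm ess}(A)$ and $\sigma_{\rm disc}(A)$ are the usual essential and discrete spectra. *)

theory Defs
  imports "HOL-Analysis.Analysis"
begin

class complex_vector = real_vector +
  fixes scaleC :: "complex \<Rightarrow> 'a \<Rightarrow> 'a" (infixr \<open>*\<^sub>C\<close> 75)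
  assumes scaleC_add_right: "a *\<^sub>C (x + y) = a *\<^sub>C x + a *\<^sub>C y"
    and scaleC_add_left: "(a + b) *\<^sub>C x = a *\<^sub>C x + b *\<^sub>C x"
    and scaleC_scaleC: "a *\<^sub>C (b *\<^sub>C x) = (a * b) *\<^sub>C x"
    and scaleC_one: "1 *\<^sub>C x = x"
    and scaleR_scaleC: "r *\<^sub>R x = complex_of_real r *\<^sub>C x"

text \<open>Inner product: conjugate-linear in the first, linear in the second argument.\<close>
class complex_inner = complex_vector + real_normed_vector +
  fixes cinner :: "'a \<Rightarrow> 'a \<Rightarrow> complex"
  assumes cinner_commute: "cinner x y = cnj (cinner y x)"
    and cinner_add_left: "cinner (x + y) z = cinner x z + cinner y z"
    and cinner_scaleC_left: "cinner (c *\<^sub>C x) y = cnj c * cinner x y"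
    and norm_eq_sqrt_cinner: "norm x = sqrt (Re (cinner x x))"

definition csubspace :: "'a::complex_vector set \<Rightarrow> bool" where
  "csubspace S \<longleftrightarrow> 0 \<in> S \<and> (\<forall>x\<in>S. \<forall>y\<in>S. x + y \<in> S) \<and> (\<forall>c. \<forall>x\<in>S. c *\<^sub>C x \<in> S)"

definition cspan :: "'a::complex_vector set \<Rightarrow> 'a set" where
  "cspan B = {\<Sum>b\<in>F. c b *\<^sub>C b | F c. finite F \<and> F \<subseteq> B}"

definition cfinite_dim :: "'a::complex_vector set \<Rightarrow> bool" where
  "cfinite_dim S \<longleftrightarrow> (\<exists>B. finite B \<and> cspan B = S)"

definition separable_space :: "'a::complex_inner itself \<Rightarrow> bool" where
  "separable_space _ \<longleftrightarrow> (\<exists>C::'a set. countable C \<and> closure C = UNIV)"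

text \<open>Orthogonal projection onto a (finite-dimensional, hence closed) subspace.\<close>
definition cproj :: "'a::complex_inner set \<Rightarrow> 'a \<Rightarrow> 'a" where
  "cproj L v = (THE w. w \<in> L \<and> (\<forall>y\<in>L. cinner y (v - w) = 0))"

definition weakly_to :: "(nat \<Rightarrow> 'a::complex_inner) \<Rightarrow> 'a \<Rightarrow> bool" where
  "weakly_to x a \<longleftrightarrow> (\<forall>y. (\<lambda>k. cinner y (x k)) \<longlonglongrightarrow> cinner y a)"

section \<open>Unbounded operators, given by a domain D and a map A (values off D irrelevant)\<close>

definition selfadjoint :: "'a::complex_inner set \<Rightarrow> ('a \<Rightarrow> 'a) \<Rightarrow> bool" where
  "selfadjoint D A \<longleftrightarrow>
     csubspace D \<and> closure D = UNIV \<and>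
     (\<forall>x\<in>D. \<forall>y\<in>D. A (x + y) = A x + A y) \<and>
     (\<forall>c. \<forall>x\<in>D. A (c *\<^sub>C x) = c *\<^sub>C A x) \<and>
     (\<forall>x\<in>D. \<forall>y\<in>D. cinner (A x) y = cinner x (A y)) \<and>
     (\<forall>y z. (\<forall>x\<in>D. cinner y (A x) = cinner z x) \<longrightarrow> y \<in> D \<and> A y = z)"

definition nonneg_op :: "'a::complex_inner set \<Rightarrow> ('a \<Rightarrow> 'a) \<Rightarrow> bool" where
  "nonneg_op D A \<longleftrightarrow> (\<forall>x\<in>D. 0 \<le> Re (cinner x (A x)))"

text \<open>(DS, S) is the nonnegative selfadjoint square root of (D, A): S \<ge> 0 selfadjoint and S^2 = A
  including domains (such an S exists and is unique for nonnegative selfadjoint A).\<close>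
definition is_op_sqrt :: "'a::complex_inner set \<Rightarrow> ('a \<Rightarrow> 'a) \<Rightarrow> 'a set \<Rightarrow> ('a \<Rightarrow> 'a) \<Rightarrow> bool" where
  "is_op_sqrt D A DS S \<longleftrightarrow> selfadjoint DS S \<and> nonneg_op DS S \<and>
     D = {x \<in> DS. S x \<in> DS} \<and> (\<forall>x\<in>D. S (S x) = A x)"

definition op_spectrum :: "'a::complex_inner set \<Rightarrow> ('a \<Rightarrow> 'a) \<Rightarrow> complex set" where
  "op_spectrum D A = {z. \<not> bij_betw (\<lambda>x. A x - z *\<^sub>C x) D UNIV}"

definition disc_spectrum :: "'a::complex_inner set \<Rightarrow> ('a \<Rightarrow> 'a) \<Rightarrow> complex set" where
  "disc_spectrum D A = {z \<in> op_spectrum D A.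
      (\<exists>e>0. ball z e \<inter> op_spectrum D A = {z}) \<and>
      {x \<in> D. A x = z *\<^sub>C x} \<noteq> {0} \<and> cfinite_dim {x \<in> D. A x = z *\<^sub>C x}}"

definition ess_spectrum :: "'a::complex_inner set \<Rightarrow> ('a \<Rightarrow> 'a) \<Rightarrow> complex set" where
  "ess_spectrum D A = op_spectrum D A - disc_spectrum D A"

definition galerkin_seq :: "'a::complex_inner set \<Rightarrow> (nat \<Rightarrow> 'a set) \<Rightarrow> bool" where
  "galerkin_seq D L \<longleftrightarrow> (\<forall>n. cfinite_dim (L n) \<and> L n \<subseteq> D)"

definition op_regular :: "'a::complex_inner set \<Rightarrow> ('a \<Rightarrow> 'a) \<Rightarrow> (nat \<Rightarrow> 'a set) \<Rightarrow> bool" where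
  "op_regular D T L \<longleftrightarrow> galerkin_seq D L \<and>
     (\<forall>f\<in>D. \<exists>g. (\<forall>n. g n \<in> L n) \<and>
        (\<lambda>n. norm (g n - f) + norm (T (g n) - T f)) \<longlonglongrightarrow> 0)"

definition galerkin_op :: "('a::complex_inner \<Rightarrow> 'a) \<Rightarrow> (nat \<Rightarrow> 'a set) \<Rightarrow> nat \<Rightarrow> 'a \<Rightarrow> 'a" where
  "galerkin_op A L n x = cproj (L n) (A x)"

text \<open>A_n on L_n defined by <y, A_n x> = <S y, S x> for y in L_n (S = A^(1/2)).\<close>
definition galerkin_form_op :: "('a::complex_inner \<Rightarrow> 'a) \<Rightarrow> (nat \<Rightarrow> 'a set) \<Rightarrow> nat \<Rightarrow> 'a \<Rightarrow> 'a" where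
  "galerkin_form_op S L n x = (THE w. w \<in> L n \<and> (\<forall>y\<in>L n. cinner y w = cinner (S y) (S x)))"

definition fin_spectrum :: "'a::complex_inner set \<Rightarrow> ('a \<Rightarrow> 'a) \<Rightarrow> complex set" where
  "fin_spectrum V T = {z. \<not> bij_betw (\<lambda>x. T x - z *\<^sub>C x) V V}"

definition lim_spectrum :: "(nat \<Rightarrow> 'a::complex_inner set) \<Rightarrow> (nat \<Rightarrow> 'a \<Rightarrow> 'a) \<Rightarrow> real set" where
  "lim_spectrum L An = {t::real. \<exists>nk lk. filterlim nk at_top sequentially \<and>
      (\<forall>k. lk k \<in> fin_spectrum (L (nk k)) (An (nk k))) \<and> lk \<longlonglongrightarrow> complex_of_real t}"

definition lim_ess_spectrum :: "(nat \<Rightarrow> 'a::complex_inner set) \<Rightarrow> (nat \<Rightarrow> 'a \<Rightarrow> 'a) \<Rightarrow> real set" where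
  "lim_ess_spectrum L An = {t::real. \<exists>nk x. filterlim nk at_top sequentially \<and>
      (\<forall>k. x k \<in> L (nk k) \<and> norm (x k) = 1) \<and> weakly_to x 0 \<and>
      (\<lambda>k. An (nk k) (x k) - complex_of_real t *\<^sub>C x k) \<longlonglongrightarrow> 0}"

definition lim_disc_spectrum :: "(nat \<Rightarrow> 'a::complex_inner set) \<Rightarrow> (nat \<Rightarrow> 'a \<Rightarrow> 'a) \<Rightarrow> real set" where
  "lim_disc_spectrum L An = lim_spectrum L An - lim_ess_spectrum L An"

end

theory Submission
  imports Defs "HOL-Library.Diagonal_Subsequence"
begin

interpretation cvs: vector_space "scaleC :: complex \<Rightarrow> 'a::complex_vector \<Rightarrow> 'a"
  by unfold_locales (simp_all add: scaleC_add_right scaleC_add_left scaleC_scaleC scaleC_one)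

lemma cspan_eq: "cspan B = cvs.span B"
  unfolding cspan_def cvs.span_explicit by auto

lemma csubspace_eq: "csubspace S = cvs.subspace S"
  unfolding csubspace_def cvs.subspace_def by auto

lemma cinner_add_right: "cinner x (y + z) = cinner x y + cinner x z"
  by (metis cinner_add_left cinner_commute complex_cnj_add)

lemma cinner_scaleC_right: "cinner x (c *\<^sub>C y) = c * cinner x y"
  by (metis cinner_commute cinner_scaleC_left complex_cnj_cnj complex_cnj_mult)

lemma cinner_zero_left[simp]: "cinner 0 x = 0"
  using cinner_add_left[of 0 0 x] by simp

lemma cinner_zero_right[simp]: "cinner x 0 = 0"
  using cinner_add_right[of x 0 0] by simp

lemma cinner_minus_left: "cinner (- x) y = - cinner x y"
  using cinner_add_left[of x "-x" y] by (simp add: add_eq_0_iff)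

lemma cinner_minus_right: "cinner x (- y) = - cinner x y"
  using cinner_add_right[of x y "-y"] by (simp add: add_eq_0_iff)

lemma cinner_diff_left: "cinner (x - y) z = cinner x z - cinner y z"
  using cinner_add_left[of x "-y" z] by (simp add: cinner_minus_left)

lemma cinner_diff_right: "cinner x (y - z) = cinner x y - cinner x z"
  using cinner_add_right[of x y "-z"] by (simp add: cinner_minus_right)

lemma cinner_sum_left: "cinner (\<Sum>i\<in>I. f i) y = (\<Sum>i\<in>I. cinner (f i) y)"
  by (induction I rule: infinite_finite_induct) (auto simp: cinner_add_left)

lemma cinner_sum_right: "cinner y (\<Sum>i\<in>I. f i) = (\<Sum>i\<in>I. cinner y (f i))"
  by (induction I rule: infinite_finite_induct) (auto simp: cinner_add_right)

lemma cinner_self_Re: "Re (cinner (x::'a::complex_inner) x) = (norm x)^2"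
proof -
  have "Re (cinner x x) \<ge> 0"
    using norm_eq_sqrt_cinner[of x] norm_ge_zero[of x] real_sqrt_ge_0_iff by metis
  thus ?thesis using norm_eq_sqrt_cinner[of x] by simp
qed

lemma cinner_self_Im: "Im (cinner (x::'a::complex_inner) x) = 0"
proof -
  have "Im (cinner x x) = Im (cnj (cinner x x))" using cinner_commute[of x x] by simp
  thus ?thesis by simp
qed

lemma cinner_self: "cinner (x::'a::complex_inner) x = complex_of_real ((norm x)^2)"
  by (simp add: complex_eq_iff cinner_self_Re cinner_self_Im)

lemma cinner_self_eq_0[simp]: "cinner (x::'a::complex_inner) x = 0 \<longleftrightarrow> x = 0"
  by (simp add: cinner_self)

lemma norm_scaleC: "norm (c *\<^sub>C (x::'a::complex_inner)) = cmod c * norm x"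
proof -
  have "(norm (c *\<^sub>C x))^2 = Re (cinner (c *\<^sub>C x) (c *\<^sub>C x))" by (simp add: cinner_self_Re)
  also have "\<dots> = Re (cnj c * c * cinner x x)"
    by (simp add: cinner_scaleC_left cinner_scaleC_right ac_simps)
  also have "\<dots> = (cmod c * norm x)^2"
  proof -
    have "cnj c * c = complex_of_real ((cmod c)^2)" using complex_norm_square[of c] by (simp add: mult.commute)
    thus ?thesis by (simp add: cinner_self power_mult_distrib)
  qed
  finally show ?thesis by (simp add: power2_eq_iff_nonneg)
qed

lemma Cauchy_Schwarz: "cmod (cinner (x::'a::complex_inner) y) \<le> norm x * norm y"
proof (cases "y = 0")
  case True thus ?thesis by simp
next
  case False
  define N where "N = (norm y)^2"
  have N: "N > 0" using False by (simp add: N_def)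
  define a where "a = cinner y x"
  have xy: "cinner x y = cnj a" by (simp add: a_def cinner_commute[of x y])
  define c where "c = a / complex_of_real N"
  have "0 \<le> Re (cinner (x - c *\<^sub>C y) (x - c *\<^sub>C y))" by (simp add: cinner_self_Re)
  also have "cinner (x - c *\<^sub>C y) (x - c *\<^sub>C y) =
     cinner x x - c * cinner x y - cnj c * cinner y x + cnj c * c * cinner y y"
    by (simp add: cinner_diff_left cinner_diff_right cinner_scaleC_left cinner_scaleC_right algebra_simps)
  also have "\<dots> = complex_of_real ((norm x)^2 - (cmod a)^2 / N)"
  proof -
    have aa: "a * cnj a = complex_of_real ((cmod a)^2)" using complex_norm_square[of a] by simp
    have e1: "c * cinner x y = complex_of_real ((cmod a)^2 / N)"
      unfolding xy c_def using aa by simp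
    have e2: "cnj c * cinner y x = complex_of_real ((cmod a)^2 / N)"
      unfolding c_def a_def[symmetric] using aa by (simp add: mult.commute)
    have cc: "cnj c * c = complex_of_real ((cmod a)^2 / N^2)"
      unfolding c_def using aa by (simp add: power2_eq_square mult.commute)
    have e3: "cnj c * c * cinner y y = complex_of_real ((cmod a)^2 / N)"
    proof -
      have yy: "cinner y y = complex_of_real N" by (simp add: cinner_self N_def)
      have r: "(cmod a)^2 / N^2 * N = (cmod a)^2/N" using N by (simp add: power2_eq_square field_simps)
      show ?thesis unfolding cc yy of_real_mult[symmetric] r ..
    qed
    show ?thesis unfolding e1 e2 e3 by (simp add: cinner_self)
  qed
  finally have "(cmod a)^2 \<le> (norm x)^2 * N" using N by (simp add: field_simps)
  hence "(cmod a)^2 \<le> (norm x * norm y)^2" by (simp add: N_def power_mult_distrib)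
  hence "cmod a \<le> norm x * norm y" by (rule power2_le_imp_le) simp
  thus ?thesis by (simp add: xy)
qed

definition orthonormal :: "'a::complex_inner set \<Rightarrow> bool" where
  "orthonormal E \<longleftrightarrow> (\<forall>e\<in>E. norm e = 1) \<and> (\<forall>e\<in>E. \<forall>f\<in>E. e \<noteq> f \<longrightarrow> cinner e f = 0)"

definition fproj :: "'a::complex_inner set \<Rightarrow> 'a \<Rightarrow> 'a" where
  "fproj E v = (\<Sum>e\<in>E. cinner e v *\<^sub>C e)"

lemma cinner_self_norm1: "norm (e::'a::complex_inner) = 1 \<Longrightarrow> cinner e e = 1"
  by (simp add: cinner_self)

lemma fproj_in_span: "fproj E v \<in> cvs.span E"
  unfolding fproj_def by (intro cvs.span_sum cvs.span_scale cvs.span_base)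

lemma cinner_fproj:
  assumes "finite E" "orthonormal E" "e \<in> E"
  shows "cinner e (fproj E v) = cinner e v"
proof -
  have "cinner e (fproj E v) = (\<Sum>f\<in>E. cinner f v * cinner e f)"
    unfolding fproj_def by (simp add: cinner_sum_right cinner_scaleC_right)
  also have "\<dots> = cinner e v * cinner e e + (\<Sum>f\<in>E-{e}. cinner f v * cinner e f)"
    using assms by (simp add: sum.remove)
  also have "(\<Sum>f\<in>E-{e}. cinner f v * cinner e f) = 0"
    using assms unfolding orthonormal_def by (intro sum.neutral) auto
  finally show ?thesis using assms unfolding orthonormal_def by (simp add: cinner_self_norm1)
qed

lemma orth_span:
  assumes "y \<in> cvs.span E" "\<And>e. e \<in> E \<Longrightarrow> cinner e w = 0"
  shows "cinner y w = 0"
  using assms(1)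
proof (induction rule: cvs.span_induct_alt)
  case base thus ?case by simp
next
  case (step c x y)
  have "cinner x w = 0" using step(1) assms(2) by blast
  thus ?case using step(2) by (simp add: cinner_add_left cinner_scaleC_left)
qed

lemma fproj_orth:
  assumes "finite E" "orthonormal E" "y \<in> cvs.span E"
  shows "cinner y (v - fproj E v) = 0"
proof (rule orth_span[OF assms(3)])
  fix e assume "e \<in> E"
  thus "cinner e (v - fproj E v) = 0" using assms by (simp add: cinner_diff_right cinner_fproj)
qed

lemma fproj_id:
  assumes "finite E" "orthonormal E" "y \<in> cvs.span E"
  shows "fproj E y = y"
proof -
  have "y - fproj E y \<in> cvs.span E" using assms fproj_in_span by (blast intro: cvs.span_diff)
  hence "cinner (y - fproj E y) (y - fproj E y) = 0" by (rule fproj_orth[OF assms(1,2)])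
  thus ?thesis by simp
qed

lemma pythag:
  assumes "cinner a b = 0"
  shows "(norm (a + b))^2 = (norm a)^2 + (norm b)^2"
proof -
  have ba: "cinner b a = 0" using assms cinner_commute[of b a] by simp
  have "(norm (a + b))^2 = Re (cinner (a+b) (a+b))" by (simp add: cinner_self_Re)
  also have "\<dots> = Re (cinner a a) + Re (cinner b b)"
    using assms ba by (simp add: cinner_add_left cinner_add_right)
  finally show ?thesis by (simp add: cinner_self_Re)
qed

lemma fproj_pythag:
  assumes "finite E" "orthonormal E"
  shows "(norm v)^2 = (norm (fproj E v))^2 + (norm (v - fproj E v))^2"
proof -
  have "cinner (fproj E v) (v - fproj E v) = 0" using fproj_orth[OF assms fproj_in_span] .
  from pythag[OF this] show ?thesis by simp
qed

lemma fproj_norm_le: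
  assumes "finite E" "orthonormal E"
  shows "norm (fproj E v) \<le> norm v"
proof -
  have "(norm (fproj E v))^2 \<le> (norm v)^2" using fproj_pythag[OF assms, of v] by simp
  thus ?thesis by (rule power2_le_imp_le) simp
qed

lemma cnj_mult_self: "cnj a * a = complex_of_real ((cmod a)^2)"
  using complex_norm_square[of a] by (simp add: mult.commute)

lemma fproj_norm_sq:
  assumes "finite E" "orthonormal E"
  shows "(norm (fproj E v))^2 = (\<Sum>e\<in>E. (cmod (cinner e v))^2)"
proof -
  have "(norm (fproj E v))^2 = Re (cinner (fproj E v) (fproj E v))" by (simp add: cinner_self_Re)
  also have "cinner (fproj E v) (fproj E v) = (\<Sum>e\<in>E. cnj (cinner e v) * cinner e (fproj E v))"
    by (subst (1) fproj_def) (simp add: cinner_sum_left cinner_scaleC_left)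
  also have "\<dots> = (\<Sum>e\<in>E. complex_of_real ((cmod (cinner e v))^2))"
    using assms by (intro sum.cong) (auto simp: cinner_fproj cnj_mult_self)
  finally show ?thesis by (simp add: Re_sum)
qed

lemma bessel:
  assumes "finite E" "orthonormal E"
  shows "(\<Sum>e\<in>E. (cmod (cinner e v))^2) \<le> (norm v)^2"
  using fproj_pythag[OF assms, of v] fproj_norm_sq[OF assms, of v] by simp

lemma gram_schmidt:
  assumes "finite B"
  shows "\<exists>E. finite E \<and> orthonormal E \<and> cvs.span E = cvs.span (B::'a::complex_inner set)"
  using assms
proof (induction rule: finite_induct)
  case empty thus ?case by (intro exI[of _ "{}"]) (simp add: orthonormal_def)
next
  case (insert b B)
  then obtain E where E: "finite E" "orthonormal E" "cvs.span E = cvs.span B" by blast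
  define r where "r = b - fproj E b"
  show ?case
  proof (cases "r = 0")
    case True
    hence "b \<in> cvs.span B" using fproj_in_span[of E b] E unfolding r_def by simp
    hence "cvs.span (insert b B) = cvs.span B" by (rule cvs.span_redundant)
    thus ?thesis using E by auto
  next
    case False
    define e where "e = complex_of_real (1 / norm r) *\<^sub>C r"
    have ne: "norm e = 1" using False by (simp add: e_def norm_scaleC norm_divide)
    have oe: "cinner f e = 0" if "f \<in> E" for f
    proof -
      have "cinner f r = 0" unfolding r_def using E that
        by (simp add: cinner_diff_right cinner_fproj)
      thus ?thesis by (simp add: e_def cinner_scaleC_right)
    qed
    have oe2: "cinner e f = 0" if "f \<in> E" for f using oe[OF that] cinner_commute[of e f] by simp
    have eE: "e \<notin> E" using oe ne cinner_self_norm1 by fastforce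
    have on: "orthonormal (insert e E)"
      using E(2) ne oe oe2 unfolding orthonormal_def by auto
    have Pb: "fproj E b \<in> cvs.span (insert b B)"
      using fproj_in_span[of E b] E(3) cvs.span_mono[of B "insert b B"] by auto
    have s1: "insert e E \<subseteq> cvs.span (insert b B)"
    proof -
      have "r \<in> cvs.span (insert b B)" unfolding r_def
        by (intro cvs.span_diff Pb) (simp add: cvs.span_base)
      hence "e \<in> cvs.span (insert b B)" unfolding e_def by (rule cvs.span_scale)
      moreover have "E \<subseteq> cvs.span (insert b B)"
        using E(3) cvs.span_superset[of E] cvs.span_mono[of B "insert b B"] by auto
      ultimately show ?thesis by auto
    qed
    have s2: "insert b B \<subseteq> cvs.span (insert e E)"
    proof -
      have "fproj E b \<in> cvs.span (insert e E)"
        using fproj_in_span[of E b] cvs.span_mono[of E "insert e E"] by auto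
      moreover have "r = complex_of_real (norm r) *\<^sub>C e" using False
        by (simp add: e_def scaleC_scaleC)
      hence "r \<in> cvs.span (insert e E)" by (metis cvs.span_base cvs.span_scale insertI1)
      ultimately have "r + fproj E b \<in> cvs.span (insert e E)" by (rule cvs.span_add[rotated])
      hence "b \<in> cvs.span (insert e E)" by (simp add: r_def)
      moreover have "B \<subseteq> cvs.span (insert e E)"
        using E(3) cvs.span_superset[of B] cvs.span_mono[of E "insert e E"] by auto
      ultimately show ?thesis by auto
    qed
    show ?thesis using s1 s2 on E(1)
      by (intro exI[of _ "insert e E"]) (auto simp: cvs.span_eq)
  qed
qed

lemma cfinite_dim_onb:
  assumes "cfinite_dim (V::'a::complex_inner set)"
  obtains E where "finite E" "orthonormal E" "cvs.span E = V"
  using assms gram_schmidt unfolding cfinite_dim_def cspan_eq by metis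

lemma cproj_eq:
  assumes "finite E" "orthonormal E" "V = cvs.span E"
  shows "cproj V v = fproj E v"
  unfolding cproj_def
proof (rule the_equality)
  show "fproj E v \<in> V \<and> (\<forall>y\<in>V. cinner y (v - fproj E v) = 0)"
    using assms fproj_in_span fproj_orth by blast
next
  fix w assume w: "w \<in> V \<and> (\<forall>y\<in>V. cinner y (v - w) = 0)"
  have d: "fproj E v - w \<in> V" using w assms fproj_in_span by (blast intro: cvs.span_diff)
  have "cinner (fproj E v - w) (v - w) = 0" using w d by blast
  moreover have "cinner (fproj E v - w) (v - fproj E v) = 0" using d assms fproj_orth by blast
  moreover have "cinner (fproj E v - w) (fproj E v - w) =
     cinner (fproj E v - w) (v - w) - cinner (fproj E v - w) (v - fproj E v)"
    by (simp add: cinner_diff_right)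
  ultimately have "cinner (fproj E v - w) (fproj E v - w) = 0" by simp
  thus "w = fproj E v" by simp
qed

lemma cproj_props:
  assumes "cfinite_dim V"
  shows "cproj V v \<in> V" "\<And>y. y \<in> V \<Longrightarrow> cinner y (v - cproj V v) = 0"
    "norm (cproj V v) \<le> norm v" "v \<in> V \<Longrightarrow> cproj V v = v"
    "cproj V (u + v) = cproj V u + cproj V v" "cproj V (c *\<^sub>C v) = c *\<^sub>C cproj V v"
proof -
  obtain E where E: "finite E" "orthonormal E" "cvs.span E = V" using cfinite_dim_onb[OF assms] .
  note eq = cproj_eq[OF E(1,2) E(3)[symmetric]]
  show "cproj V v \<in> V" unfolding eq using fproj_in_span E by blast
  show "\<And>y. y \<in> V \<Longrightarrow> cinner y (v - cproj V v) = 0" unfolding eq using fproj_orth E by blast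
  show "norm (cproj V v) \<le> norm v" unfolding eq using fproj_norm_le E by blast
  show "v \<in> V \<Longrightarrow> cproj V v = v" unfolding eq using fproj_id E by blast
  show "cproj V (u + v) = cproj V u + cproj V v"
    unfolding eq fproj_def by (simp add: cinner_add_right scaleC_add_left sum.distrib)
  show "cproj V (c *\<^sub>C v) = c *\<^sub>C cproj V v"
    unfolding eq fproj_def by (simp add: cinner_scaleC_right cvs.scale_sum_right scaleC_scaleC)
qed

lemma cfinite_dim_subspace:
  assumes "cfinite_dim V" shows "cvs.subspace V"
  using assms unfolding cfinite_dim_def cspan_eq by auto

lemma fd_inj_surj:
  fixes f :: "'a::complex_inner \<Rightarrow> 'a"
  assumes fd: "cfinite_dim V" and fV: "f ` V \<subseteq> V" and inj: "inj_on f V"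
    and add: "\<And>x y. f (x + y) = f x + f y" and sc: "\<And>c x. f (c *\<^sub>C x) = c *\<^sub>C f x"
  shows "f ` V = V"
proof -
  interpret lf: Vector_Spaces.linear "(*\<^sub>C)" "(*\<^sub>C)" f
    by unfold_locales (simp_all add: add sc scaleC_add_right scaleC_add_left scaleC_scaleC scaleC_one)
  have sV: "cvs.subspace V" by (rule cfinite_dim_subspace[OF fd])
  obtain B where B: "B \<subseteq> V" "cvs.independent B" "V \<subseteq> cvs.span B" "card B = cvs.dim V"
    by (rule cvs.basis_exists)
  have spB: "cvs.span B = V" by (rule cvs.span_subspace[OF B(1) B(3) sV])
  have ind: "cvs.independent (f ` B)"
    by (rule lf.independent_injective_image[OF B(2)]) (simp add: spB inj)
  have cd: "card (f ` B) = card B" by (rule card_image[OF inj_on_subset[OF inj B(1)]])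
  obtain C where C: "finite C" "cvs.span C = V" using fd unfolding cfinite_dim_def cspan_eq by blast
  have "B \<subseteq> cvs.span C" using B(1) C(2) by simp
  hence finB: "finite B" using cvs.independent_span_bound[OF C(1) B(2)] by blast
  have "V \<subseteq> cvs.span (f ` B)"
  proof (rule ccontr)
    assume "\<not> ?thesis"
    then obtain a where a: "a \<in> V" "a \<notin> cvs.span (f ` B)" by auto
    have i2: "cvs.independent (insert a (f ` B))" by (rule cvs.independent_insertI[OF a(2) ind])
    have "f ` B \<subseteq> V" using fV B(1) by blast
    hence s2: "insert a (f ` B) \<subseteq> cvs.span B" unfolding spB using a(1) by blast
    have le: "card (insert a (f ` B)) \<le> card B" using cvs.independent_span_bound[OF finB i2 s2] by (rule conjunct2)
    have anot: "a \<notin> f ` B" using a(2) cvs.span_superset[of "f ` B"] by blast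
    have "card (insert a (f ` B)) = Suc (card B)"
      using card_insert_disjoint[of "f ` B" a] finB cd anot by simp
    with le show False by simp
  qed
  also have "cvs.span (f ` B) = f ` V" using lf.span_image spB by simp
  finally show ?thesis using fV by blast
qed

lemma fin_spec_eigen:
  fixes T :: "'a::complex_inner \<Rightarrow> 'a"
  assumes fd: "cfinite_dim V" and z: "z \<in> fin_spectrum V T" and TV: "\<And>x. x \<in> V \<Longrightarrow> T x \<in> V"
    and add: "\<And>x y. x \<in> V \<Longrightarrow> y \<in> V \<Longrightarrow> T (x + y) = T x + T y"
    and sc: "\<And>c x. x \<in> V \<Longrightarrow> T (c *\<^sub>C x) = c *\<^sub>C T x"
  shows "\<exists>x\<in>V. x \<noteq> 0 \<and> T x = z *\<^sub>C x"
proof (rule ccontr)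
  assume no: "\<not> ?thesis"
  have sV: "cvs.subspace V" by (rule cfinite_dim_subspace[OF fd])
  define f where "f x = T x - z *\<^sub>C x" for x
  define g where "g x = f (cproj V x)" for x
  have PV: "cproj V x \<in> V" for x using cproj_props(1)[OF fd] .
  have gf: "g x = f x" if "x \<in> V" for x using cproj_props(4)[OF fd that] by (simp add: g_def)
  have fV: "f x \<in> V" if "x \<in> V" for x
    unfolding f_def using TV[OF that] that sV by (simp add: cvs.subspace_diff cvs.subspace_scale)
  have fadd: "f (x + y) = f x + f y" if "x \<in> V" "y \<in> V" for x y
    unfolding f_def using add[OF that] by (simp add: scaleC_add_right)
  have fsc: "f (c *\<^sub>C x) = c *\<^sub>C f x" if "x \<in> V" for c x
    unfolding f_def using sc[OF that] by (simp add: cvs.scale_right_diff_distrib scaleC_scaleC mult.commute)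
  have gadd: "g (x + y) = g x + g y" for x y
    unfolding g_def cproj_props(5)[OF fd] using fadd PV by simp
  have gsc: "g (c *\<^sub>C x) = c *\<^sub>C g x" for c x
    unfolding g_def cproj_props(6)[OF fd] using fsc PV by simp
  have fminus: "f (x - y) = f x - f y" if "x \<in> V" "y \<in> V" for x y
  proof -
    have "f x = f ((x - y) + y)" by simp
    also have "\<dots> = f (x - y) + f y" using that sV by (intro fadd) (auto simp: cvs.subspace_diff)
    finally show ?thesis by simp
  qed
  have injf: "inj_on f V"
  proof (rule inj_onI)
    fix x y assume xy: "x \<in> V" "y \<in> V" "f x = f y"
    have "x - y \<in> V" using xy sV by (simp add: cvs.subspace_diff)
    moreover have "T (x - y) = z *\<^sub>C (x - y)"
      using fminus[OF xy(1,2)] xy(3) unfolding f_def[of "x - y"] by simp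
    ultimately have "x - y = 0" using no by blast
    thus "x = y" by simp
  qed
  have injg: "inj_on g V" using injf gf by (simp add: inj_on_def)
  have gV: "g ` V \<subseteq> V" using fV gf by auto
  have "g ` V = V" by (rule fd_inj_surj[OF fd gV injg gadd gsc])
  hence "f ` V = V" using gf by (metis image_cong)
  hence "bij_betw f V V" using injf by (simp add: bij_betw_def)
  thus False using z unfolding fin_spectrum_def f_def by simp
qed

lemma scaleC_2: "(2::complex) *\<^sub>C v = v + v"
  using scaleC_add_left[of 1 1 v] by (simp add: scaleC_one)

lemma parallelogram:
  fixes a b :: "'a::complex_inner"
  shows "(norm (a + b))^2 + (norm (a - b))^2 = 2 * (norm a)^2 + 2 * (norm b)^2"
proof -
  have "(norm (a + b))^2 + (norm (a - b))^2 = Re (cinner (a+b) (a+b)) + Re (cinner (a-b) (a-b))"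
    by (simp add: cinner_self_Re)
  also have "\<dots> = 2 * Re (cinner a a) + 2 * Re (cinner b b)"
    by (simp add: cinner_add_left cinner_add_right cinner_diff_left cinner_diff_right)
  finally show ?thesis by (simp add: cinner_self_Re)
qed

lemma proj_line:
  fixes u y :: "'a::complex_inner"
  assumes "y \<noteq> 0"
  shows "(norm (u - (cinner y u / complex_of_real ((norm y)^2)) *\<^sub>C y))^2
          = (norm u)^2 - (cmod (cinner y u))^2 / (norm y)^2"
proof -
  define N where "N = (norm y)^2"
  have N: "N > 0" using assms by (simp add: N_def)
  define a where "a = cinner y u"
  have xy: "cinner u y = cnj a" by (simp add: a_def cinner_commute[of u y])
  define c where "c = a / complex_of_real N"
  have "cinner (u - c *\<^sub>C y) (u - c *\<^sub>C y) =
     cinner u u - c * cinner u y - cnj c * cinner y u + cnj c * c * cinner y y"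
    by (simp add: cinner_diff_left cinner_diff_right cinner_scaleC_left cinner_scaleC_right algebra_simps)
  also have "\<dots> = complex_of_real ((norm u)^2 - (cmod a)^2 / N)"
  proof -
    have aa: "a * cnj a = complex_of_real ((cmod a)^2)" using complex_norm_square[of a] by simp
    have e1: "c * cinner u y = complex_of_real ((cmod a)^2 / N)"
      unfolding xy c_def using aa by simp
    have e2: "cnj c * cinner y u = complex_of_real ((cmod a)^2 / N)"
      unfolding c_def a_def[symmetric] using aa by (simp add: mult.commute)
    have cc: "cnj c * c = complex_of_real ((cmod a)^2 / N^2)"
      unfolding c_def using aa by (simp add: power2_eq_square mult.commute)
    have e3: "cnj c * c * cinner y y = complex_of_real ((cmod a)^2 / N)"
    proof -
      have yy: "cinner y y = complex_of_real N" by (simp add: cinner_self N_def)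
      have r: "(cmod a)^2 / N^2 * N = (cmod a)^2/N" using N by (simp add: power2_eq_square field_simps)
      show ?thesis unfolding cc yy of_real_mult[symmetric] r ..
    qed
    show ?thesis unfolding e1 e2 e3 by (simp add: cinner_self)
  qed
  finally have "cinner (u - c *\<^sub>C y) (u - c *\<^sub>C y) = complex_of_real ((norm u)^2 - (cmod a)^2 / N)" .
  hence "Re (cinner (u - c *\<^sub>C y) (u - c *\<^sub>C y)) = (norm u)^2 - (cmod a)^2 / N" by simp
  thus ?thesis by (simp add: cinner_self_Re c_def a_def N_def)
qed

lemma closed_subspace_proj:
  fixes M :: "'a::{complex_inner, complete_space} set"
  assumes sub: "csubspace M" and cl: "closed M"
  shows "\<exists>w\<in>M. \<forall>y\<in>M. cinner y (v - w) = 0"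
proof -
  have M0: "0 \<in> M" and Madd: "\<And>x y. x \<in> M \<Longrightarrow> y \<in> M \<Longrightarrow> x + y \<in> M"
    and Msc: "\<And>c x. x \<in> M \<Longrightarrow> c *\<^sub>C x \<in> M" using sub unfolding csubspace_def by auto
  define D where "D = (\<lambda>y. norm (v - y)) ` M"
  define d where "d = Inf D"
  have Dne: "D \<noteq> {}" using M0 by (auto simp: D_def)
  have bdd: "bdd_below D" unfolding D_def by (rule bdd_belowI[of _ 0]) auto
  have dle: "d \<le> norm (v - y)" if "y \<in> M" for y
    unfolding d_def by (rule cInf_lower[OF _ bdd]) (use that in \<open>auto simp: D_def\<close>)
  have d0: "d \<ge> 0" unfolding d_def by (rule cInf_greatest[OF Dne]) (auto simp: D_def)
  have "\<exists>y\<in>M. (norm (v - y))^2 < d^2 + 1 / real (Suc n)" for n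
  proof -
    have "d < sqrt (d^2 + 1 / real (Suc n))"
      by (rule real_less_rsqrt) simp
    then obtain z where "z \<in> D" "z < sqrt (d^2 + 1 / real (Suc n))"
      using cInf_lessD[OF Dne] unfolding d_def by blast
    then obtain y where y: "y \<in> M" "norm (v - y) < sqrt (d^2 + 1 / real (Suc n))" unfolding D_def by auto
    hence "(norm (v - y))^2 < (sqrt (d^2 + 1 / real (Suc n)))^2"
      by (intro power_strict_mono) auto
    hence "(norm (v - y))^2 < d^2 + 1 / real (Suc n)" by simp
    thus ?thesis using y by blast
  qed
  then obtain y where y: "\<And>n. y n \<in> M" "\<And>n. (norm (v - y n))^2 < d^2 + 1 / real (Suc n)"
    by metis
  have yy: "(norm (y n - y m))^2 \<le> 2 / real (Suc n) + 2 / real (Suc m)" for n m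
  proof -
    have mid: "(1/2::complex) *\<^sub>C (y n + y m) \<in> M" using y(1) Madd Msc by blast
    have "d \<le> norm (v - (1/2::complex) *\<^sub>C (y n + y m))" by (rule dle[OF mid])
    hence "d^2 \<le> (norm (v - (1/2::complex) *\<^sub>C (y n + y m)))^2" using d0 by (simp add: power_mono)
    moreover have "(v - y n) + (v - y m) = (2::complex) *\<^sub>C (v - (1/2::complex) *\<^sub>C (y n + y m))"
      by (simp add: cvs.scale_right_diff_distrib scaleC_scaleC scaleC_add_right scaleC_2)
    hence "(norm ((v - y n) + (v - y m)))^2 = 4 * (norm (v - (1/2::complex) *\<^sub>C (y n + y m)))^2"
      by (simp add: norm_scaleC power_mult_distrib)
    moreover have "(norm ((v - y n) + (v - y m)))^2 + (norm (y m - y n))^2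
        = 2 * (norm (v - y n))^2 + 2 * (norm (v - y m))^2"
      using parallelogram[of "v - y n" "v - y m"] by simp
    ultimately have "(norm (y m - y n))^2 \<le> 2 * (norm (v - y n))^2 + 2 * (norm (v - y m))^2 - 4 * d^2"
      by linarith
    also have "\<dots> \<le> 2 / real (Suc n) + 2 / real (Suc m)" using y(2)[of n] y(2)[of m] by linarith
    finally show ?thesis by (simp add: norm_minus_commute)
  qed
  have "Cauchy y"
  proof (rule metric_CauchyI)
    fix e :: real assume e: "e > 0"
    obtain N :: nat where N: "4 / e^2 < real N" using reals_Archimedean2 by blast
    have "4 / e^2 > 0" using e by simp
    hence Npos: "real N > 0" using N by linarith
    show "\<exists>M. \<forall>m\<ge>M. \<forall>n\<ge>M. dist (y m) (y n) < e"
    proof (intro exI allI impI)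
      fix m n assume mn: "m \<ge> N" "n \<ge> N"
      have a: "2 / real (Suc m) \<le> 2 / real N" using mn Npos by (intro divide_left_mono) auto
      have b: "2 / real (Suc n) \<le> 2 / real N" using mn Npos by (intro divide_left_mono) auto
      have "(dist (y m) (y n))^2 \<le> 4 / real N" using yy[of m n] a b by (simp add: dist_norm)
      also have "\<dots> < e^2" using N e Npos by (simp add: field_simps)
      finally show "dist (y m) (y n) < e" using e by (simp add: power_less_imp_less_base)
    qed
  qed
  then obtain w where w: "y \<longlonglongrightarrow> w" using Cauchy_convergent_iff convergent_def by blast
  have wM: "w \<in> M" using cl w y(1) closed_sequential_limits by blast
  have vw: "(norm (v - w))^2 \<le> d^2"
  proof -
    have "(\<lambda>n. (norm (v - y n))^2) \<longlonglongrightarrow> (norm (v - w))^2" by (intro tendsto_intros w)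
    moreover have "(\<lambda>n. d^2 + 1 / real (Suc n)) \<longlonglongrightarrow> d^2 + 0"
      by (intro tendsto_intros) (rule LIMSEQ_Suc[OF lim_inverse_n'[unfolded inverse_eq_divide]])
    ultimately show ?thesis using y(2) by (auto intro: LIMSEQ_le less_imp_le)
  qed
  show ?thesis
  proof (intro bexI[OF _ wM] ballI)
    fix z assume z: "z \<in> M"
    show "cinner z (v - w) = 0"
    proof (cases "z = 0")
      case True thus ?thesis by simp
    next
      case False
      define c where "c = cinner z (v - w) / complex_of_real ((norm z)^2)"
      have "w + c *\<^sub>C z \<in> M" using wM z Madd Msc by blast
      hence "d \<le> norm (v - (w + c *\<^sub>C z))" by (rule dle)
      hence "d^2 \<le> (norm ((v - w) - c *\<^sub>C z))^2" using d0 by (simp add: power_mono diff_diff_eq)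
      also have "\<dots> = (norm (v - w))^2 - (cmod (cinner z (v - w)))^2 / (norm z)^2"
        unfolding c_def by (rule proj_line[OF False])
      finally have "(cmod (cinner z (v - w)))^2 / (norm z)^2 \<le> 0" using vw by linarith
      hence "(cmod (cinner z (v - w)))^2 \<le> 0" using False by (simp add: divide_le_0_iff)
      thus ?thesis by simp
    qed
  qed
qed

lemma riesz:
  fixes \<phi> :: "'a::{complex_inner, complete_space} \<Rightarrow> complex"
  assumes add: "\<And>x y. \<phi> (x + y) = \<phi> x + \<phi> y" and sc: "\<And>c x. \<phi> (c *\<^sub>C x) = cnj c * \<phi> x"
    and bd: "\<And>x. cmod (\<phi> x) \<le> K * norm x"
  shows "\<exists>z. \<forall>y. \<phi> y = cinner y z"
proof -
  have \<phi>0: "\<phi> 0 = 0" using add[of 0 0] by simp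
  have \<phi>diff: "\<phi> (x - y) = \<phi> x - \<phi> y" for x y using add[of "x - y" y] by simp
  define Ker where "Ker = {x. \<phi> x = 0}"
  have subK: "csubspace Ker" unfolding csubspace_def Ker_def using \<phi>0 add sc by auto
  have clK: "closed Ker" unfolding closed_sequential_limits
  proof (intro allI impI)
    fix s l assume a: "(\<forall>n. s n \<in> Ker) \<and> s \<longlonglongrightarrow> l"
    have b: "cmod (\<phi> l) \<le> K * norm (l - s n)" for n
      using bd[of "l - s n"] a \<phi>diff[of l "s n"] by (simp add: Ker_def)
    have "(\<lambda>n. K * norm (l - s n)) \<longlonglongrightarrow> K * norm (l - l)"
      using a by (intro tendsto_intros) auto
    hence "cmod (\<phi> l) \<le> K * norm (l - l)" using b by (intro LIMSEQ_le_const) auto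
    thus "l \<in> Ker" by (simp add: Ker_def)
  qed
  show ?thesis
  proof (cases "\<forall>y. \<phi> y = 0")
    case True thus ?thesis by (intro exI[of _ 0]) simp
  next
    case False
    then obtain v where v: "\<phi> v \<noteq> 0" by blast
    obtain w where w: "w \<in> Ker" "\<And>k. k \<in> Ker \<Longrightarrow> cinner k (v - w) = 0"
      using closed_subspace_proj[OF subK clK, of v] by blast
    define h where "h = v - w"
    have \<phi>h: "\<phi> h = \<phi> v" using w(1) \<phi>diff by (simp add: h_def Ker_def)
    hence h0: "h \<noteq> 0" using v \<phi>0 by auto
    define z where "z = (\<phi> h / complex_of_real ((norm h)^2)) *\<^sub>C h"
    show ?thesis
    proof (intro exI[of _ z] allI)
      fix y
      define c where "c = cnj (\<phi> y / \<phi> h)"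
      have "\<phi> (y - c *\<^sub>C h) = 0" using v \<phi>h by (simp add: \<phi>diff sc c_def)
      hence "cinner (y - c *\<^sub>C h) h = 0" using w(2) unfolding Ker_def h_def by blast
      hence "cinner y h = cnj c * cinner h h" by (simp add: cinner_diff_left cinner_scaleC_left)
      hence "cinner y h = (\<phi> y / \<phi> h) * complex_of_real ((norm h)^2)" by (simp add: c_def cinner_self)
      thus "\<phi> y = cinner y z" using h0 v \<phi>h by (simp add: z_def cinner_scaleC_right)
    qed
  qed
qed

lemma weak_compact:
  fixes x :: "nat \<Rightarrow> 'a::{complex_inner, complete_space}"
  assumes sep: "separable_space TYPE('a)" and bd: "\<And>k. norm (x k) \<le> B"
  shows "\<exists>r a. strict_mono r \<and> weakly_to (x \<circ> r) a"
proof -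
  obtain C :: "'a set" where C: "countable C" "closure C = UNIV"
    using sep unfolding separable_space_def by blast
  have Cne: "C \<noteq> {}" using C(2) by auto
  define c where "c = from_nat_into C"
  have rc: "range c = C" using Cne C(1) by (simp add: c_def)
  have B0: "B \<ge> 0" using bd[of 0] norm_ge_zero order_trans by blast
  interpret ss: subseqs "\<lambda>i s. convergent (\<lambda>k. cinner (c i) (x (s k)))"
  proof
    fix n and s :: "nat \<Rightarrow> nat" assume "strict_mono s"
    define f where "f k = cinner (c n) (x (s k))" for k
    have "bounded (range f)"
      unfolding bounded_iff
    proof (intro exI ballI)
      fix z assume "z \<in> range f"
      then obtain k where "z = f k" by blast
      thus "norm z \<le> norm (c n) * B"
        using Cauchy_Schwarz[of "c n" "x (s k)"] mult_left_mono[OF bd[of "s k"] norm_ge_zero[of "c n"]]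
        by (simp add: f_def)
    qed
    then obtain l r where "strict_mono r" "(f \<circ> r) \<longlonglongrightarrow> l"
      using bounded_imp_convergent_subsequence by blast
    thus "\<exists>r'. strict_mono r' \<and> convergent (\<lambda>k. cinner (c n) (x ((s \<circ> r') k)))"
      by (intro exI[of _ r]) (auto simp: convergent_def f_def o_def)
  qed
  define r where "r = ss.diagseq"
  have smr: "strict_mono r" unfolding r_def by (rule ss.subseq_diagseq)
  have convC: "convergent (\<lambda>k. cinner (c i) (x (r k)))" for i
  proof -
    have "convergent (\<lambda>k. cinner (c i) (x ((ss.diagseq \<circ> (+) (Suc i)) k)))"
    proof (rule ss.diagseq_holds)
      fix r' :: "nat \<Rightarrow> nat" and s n
      assume "strict_mono r'" "convergent (\<lambda>k. cinner (c n) (x (s k)))"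
      thus "convergent (\<lambda>k. cinner (c n) (x ((s \<circ> r') k)))"
        using convergent_subseq_convergent[of "\<lambda>k. cinner (c n) (x (s k))" r'] by (simp add: o_def)
    qed
    hence "convergent (\<lambda>k. cinner (c i) (x (r (k + Suc i))))"
      by (simp add: r_def o_def add.commute)
    thus ?thesis using convergent_ignore_initial_segment[of "\<lambda>k. cinner (c i) (x (r k))" "Suc i"] by simp
  qed
  have convy: "convergent (\<lambda>k. cinner y (x (r k)))" for y
    unfolding Cauchy_convergent_iff[symmetric]
  proof (rule metric_CauchyI)
    fix e :: real assume e: "e > 0"
    have "y \<in> closure C" using C(2) by simp
    moreover have "e / (3 * (B + 1)) > 0" using e B0 by simp
    ultimately obtain c' where c': "c' \<in> C" "dist c' y < e / (3 * (B + 1))"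
      unfolding closure_approachable by blast
    obtain i where ci: "c i = c'" using rc c'(1) by blast
    have "Cauchy (\<lambda>k. cinner (c i) (x (r k)))" using convC Cauchy_convergent_iff by blast
    then obtain M where M: "\<And>m n. m \<ge> M \<Longrightarrow> n \<ge> M \<Longrightarrow> dist (cinner c' (x (r m))) (cinner c' (x (r n))) < e / 3"
    proof -
      have "e / 3 > 0" using e by simp
      thus ?thesis using \<open>Cauchy (\<lambda>k. cinner (c i) (x (r k)))\<close> that unfolding Cauchy_def ci by blast
    qed
    have small: "cmod (cinner (y - c') (x k)) < e / 3" for k
    proof -
      have "cmod (cinner (y - c') (x k)) \<le> norm (y - c') * B"
        using Cauchy_Schwarz[of "y - c'" "x k"] mult_left_mono[OF bd[of k] norm_ge_zero[of "y - c'"]] by simp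
      also have "\<dots> \<le> norm (y - c') * (B + 1)" by (simp add: mult_left_mono)
      also have "\<dots> < e / (3 * (B + 1)) * (B + 1)"
        using c'(2) B0 by (intro mult_strict_right_mono) (auto simp: dist_norm norm_minus_commute)
      also have "\<dots> = e / 3" using B0 by (simp add: field_simps)
      finally show ?thesis .
    qed
    show "\<exists>M. \<forall>m\<ge>M. \<forall>n\<ge>M. dist (cinner y (x (r m))) (cinner y (x (r n))) < e"
    proof (intro exI allI impI)
      fix m n assume mn: "m \<ge> M" "n \<ge> M"
      have eq: "cinner y (x (r m)) - cinner y (x (r n)) =
         cinner (y - c') (x (r m)) + (cinner c' (x (r m)) - cinner c' (x (r n))) - cinner (y - c') (x (r n))"
        by (simp add: cinner_diff_left)
      have "dist (cinner y (x (r m))) (cinner y (x (r n))) \<le>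
         cmod (cinner (y - c') (x (r m))) + dist (cinner c' (x (r m))) (cinner c' (x (r n))) + cmod (cinner (y - c') (x (r n)))"
        unfolding dist_norm eq
        using norm_triangle_ineq4[of "cinner (y - c') (x (r m)) + (cinner c' (x (r m)) - cinner c' (x (r n)))" "cinner (y - c') (x (r n))"]
          norm_triangle_ineq[of "cinner (y - c') (x (r m))" "cinner c' (x (r m)) - cinner c' (x (r n))"]
        by linarith
      also have "\<dots> < e / 3 + e / 3 + e / 3" using small M[OF mn] by (intro add_strict_mono) auto
      finally show "dist (cinner y (x (r m))) (cinner y (x (r n))) < e" by simp
    qed
  qed
  define \<phi> where "\<phi> y = lim (\<lambda>k. cinner y (x (r k)))" for y
  have L: "(\<lambda>k. cinner y (x (r k))) \<longlonglongrightarrow> \<phi> y" for y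
    using convy[of y] by (simp add: \<phi>_def convergent_LIMSEQ_iff)
  have \<phi>add: "\<phi> (y + z) = \<phi> y + \<phi> z" for y z
  proof (rule LIMSEQ_unique[OF L])
    show "(\<lambda>k. cinner (y + z) (x (r k))) \<longlonglongrightarrow> \<phi> y + \<phi> z"
      unfolding cinner_add_left by (intro tendsto_add L)
  qed
  have \<phi>sc: "\<phi> (a *\<^sub>C y) = cnj a * \<phi> y" for a y
  proof (rule LIMSEQ_unique[OF L])
    show "(\<lambda>k. cinner (a *\<^sub>C y) (x (r k))) \<longlonglongrightarrow> cnj a * \<phi> y"
      unfolding cinner_scaleC_left by (intro tendsto_mult tendsto_const L)
  qed
  have \<phi>bd: "cmod (\<phi> y) \<le> B * norm y" for y
  proof (rule LIMSEQ_le_const2)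
    show "(\<lambda>k. cmod (cinner y (x (r k)))) \<longlonglongrightarrow> cmod (\<phi> y)" by (intro tendsto_intros L)
    show "\<exists>N. \<forall>n\<ge>N. cmod (cinner y (x (r n))) \<le> B * norm y"
    proof (intro exI allI impI)
      fix n :: nat
      show "cmod (cinner y (x (r n))) \<le> B * norm y"
        using Cauchy_Schwarz[of y "x (r n)"] mult_left_mono[OF bd[of "r n"] norm_ge_zero[of y]]
        by (simp add: mult.commute)
    qed
  qed
  obtain a where a: "\<And>y. \<phi> y = cinner y a" using riesz[OF \<phi>add \<phi>sc \<phi>bd] by blast
  have "weakly_to (x \<circ> r) a" unfolding weakly_to_def using L a by (simp add: o_def)
  thus ?thesis using smr by blast
qed

lemma tendsto_cinner_right:
  assumes "x \<longlonglongrightarrow> a" shows "(\<lambda>n. cinner w (x n)) \<longlonglongrightarrow> cinner w a"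
proof -
  have "(\<lambda>n. norm w * norm (x n - a)) \<longlonglongrightarrow> norm w * norm (a - a)"
    using assms by (intro tendsto_intros)
  hence z: "(\<lambda>n. norm w * norm (x n - a)) \<longlonglongrightarrow> 0" by simp
  have "(\<lambda>n. cinner w (x n) - cinner w a) \<longlonglongrightarrow> 0"
  proof (rule Lim_null_comparison[OF _ z])
    show "\<forall>\<^sub>F n in sequentially. norm (cinner w (x n) - cinner w a) \<le> norm w * norm (x n - a)"
      using Cauchy_Schwarz[of w] by (simp add: cinner_diff_right[symmetric])
  qed
  thus ?thesis by (simp add: LIM_zero_iff)
qed

lemma tendsto_scaleC:
  fixes f :: "nat \<Rightarrow> 'a::complex_inner"
  assumes "f \<longlonglongrightarrow> a" shows "(\<lambda>n. c *\<^sub>C f n) \<longlonglongrightarrow> c *\<^sub>C a"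
proof -
  have "(\<lambda>n. cmod c * norm (f n - a)) \<longlonglongrightarrow> cmod c * norm (a - a)"
    using assms by (intro tendsto_intros)
  hence z: "(\<lambda>n. cmod c * norm (f n - a)) \<longlonglongrightarrow> 0" by simp
  have "(\<lambda>n. c *\<^sub>C f n - c *\<^sub>C a) \<longlonglongrightarrow> 0"
    by (rule Lim_null_comparison[OF _ z]) (simp add: norm_scaleC cvs.scale_right_diff_distrib[symmetric])
  thus ?thesis by (simp add: LIM_zero_iff)
qed

lemma tendsto_cinner_left:
  assumes "x \<longlonglongrightarrow> a" shows "(\<lambda>n. cinner (x n) w) \<longlonglongrightarrow> cinner a w"
proof -
  have "(\<lambda>n. cnj (cinner w (x n))) \<longlonglongrightarrow> cnj (cinner w a)"
    by (intro tendsto_cnj tendsto_cinner_right assms)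
  moreover have "\<And>n. cinner (x n) w = cnj (cinner w (x n))" by (rule cinner_commute)
  moreover have "cinner a w = cnj (cinner w a)" by (rule cinner_commute)
  ultimately show ?thesis by simp
qed

lemma weakly_to_conj:
  assumes "weakly_to x a" shows "(\<lambda>n. cinner (x n) w) \<longlonglongrightarrow> cinner a w"
proof -
  have "(\<lambda>n. cnj (cinner w (x n))) \<longlonglongrightarrow> cnj (cinner w a)"
    using assms unfolding weakly_to_def by (intro tendsto_cnj) auto
  moreover have "\<And>n. cinner (x n) w = cnj (cinner w (x n))" by (rule cinner_commute)
  moreover have "cinner a w = cnj (cinner w a)" by (rule cinner_commute)
  ultimately show ?thesis by simp
qed

lemma norm_tendsto_weakly:
  assumes "(\<lambda>n. x n - y n) \<longlonglongrightarrow> 0" "weakly_to y a" shows "weakly_to x a"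
  unfolding weakly_to_def
proof
  fix w
  have "(\<lambda>n. cinner w (x n - y n) + cinner w (y n)) \<longlonglongrightarrow> cinner w 0 + cinner w a"
  proof (rule tendsto_add)
    show "(\<lambda>n. cinner w (x n - y n)) \<longlonglongrightarrow> cinner w 0" by (rule tendsto_cinner_right[OF assms(1)])
    show "(\<lambda>n. cinner w (y n)) \<longlonglongrightarrow> cinner w a" using assms(2) unfolding weakly_to_def by blast
  qed
  thus "(\<lambda>n. cinner w (x n)) \<longlonglongrightarrow> cinner w a" by (simp add: cinner_diff_right)
qed

context
  fixes D :: "'a::{complex_inner, complete_space} set" and A :: "'a \<Rightarrow> 'a"
  assumes sa: "selfadjoint D A"
begin

lemma sa_sub: "csubspace D" using sa unfolding selfadjoint_def by blast
lemma sa_add: "x \<in> D \<Longrightarrow> y \<in> D \<Longrightarrow> A (x + y) = A x + A y" using sa unfolding selfadjoint_def by blast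
lemma sa_sc: "x \<in> D \<Longrightarrow> A (c *\<^sub>C x) = c *\<^sub>C A x" using sa unfolding selfadjoint_def by blast
lemma sa_sym: "x \<in> D \<Longrightarrow> y \<in> D \<Longrightarrow> cinner (A x) y = cinner x (A y)" using sa unfolding selfadjoint_def by blast
lemma sa_adj: "(\<And>x. x \<in> D \<Longrightarrow> cinner y (A x) = cinner z x) \<Longrightarrow> y \<in> D \<and> A y = z"
  using sa unfolding selfadjoint_def by blast

lemma D0: "0 \<in> D" using sa_sub unfolding csubspace_def by blast
lemma Dadd: "x \<in> D \<Longrightarrow> y \<in> D \<Longrightarrow> x + y \<in> D" using sa_sub unfolding csubspace_def by blast
lemma Dsc: "x \<in> D \<Longrightarrow> c *\<^sub>C x \<in> D" using sa_sub unfolding csubspace_def by blast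
lemma Ddiff: "x \<in> D \<Longrightarrow> y \<in> D \<Longrightarrow> x - y \<in> D"
  using Dadd[of x "(-1) *\<^sub>C y"] Dsc[of y "-1"] cvs.scale_minus_left[of 1 y] by (simp add: scaleC_one)
lemma A0: "A 0 = 0" using sa_add[OF D0 D0] by simp
lemma Adiff: "x \<in> D \<Longrightarrow> y \<in> D \<Longrightarrow> A (x - y) = A x - A y"
  using sa_add[of "x - y" y] Ddiff by simp

lemma sa_real: "x \<in> D \<Longrightarrow> Im (cinner x (A x)) = 0"
proof -
  assume x: "x \<in> D"
  have "cinner x (A x) = cnj (cinner x (A x))"
    using sa_sym[OF x x] cinner_commute[of "A x" x] by simp
  hence "Im (cinner x (A x)) = Im (cnj (cinner x (A x)))" by simp
  thus ?thesis by simp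
qed

lemma eig_from_form:
  assumes "\<And>f. f \<in> D \<Longrightarrow> cinner (A f) x = complex_of_real t * cinner f x"
  shows "x \<in> D \<and> A x = complex_of_real t *\<^sub>C x"
proof (rule sa_adj)
  fix f assume f: "f \<in> D"
  have "cinner x (A f) = cnj (cinner (A f) x)" by (simp add: cinner_commute[of x])
  also have "\<dots> = complex_of_real t * cinner x f" using assms[OF f] by (simp add: cinner_commute[of f x])
  finally show "cinner x (A f) = cinner (complex_of_real t *\<^sub>C x) f" by (simp add: cinner_scaleC_left)
qed

lemma bij_criterion:
  assumes c: "c > 0" and bound: "\<And>x. x \<in> D \<Longrightarrow> c * norm x \<le> norm (A x - z *\<^sub>C x)"
    and ker: "\<And>x. x \<in> D \<Longrightarrow> A x = cnj z *\<^sub>C x \<Longrightarrow> x = 0"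
  shows "bij_betw (\<lambda>x. A x - z *\<^sub>C x) D UNIV"
proof -
  define T where "T x = A x - z *\<^sub>C x" for x
  have Tdiff: "T (x - y) = T x - T y" if "x \<in> D" "y \<in> D" for x y
    unfolding T_def using Adiff[OF that] by (simp add: cvs.scale_right_diff_distrib)
  have injT: "inj_on T D"
  proof (rule inj_onI)
    fix x y assume xy: "x \<in> D" "y \<in> D" "T x = T y"
    have "c * norm (x - y) \<le> 0" using bound[OF Ddiff[OF xy(1,2)]] Tdiff[OF xy(1,2)] xy(3)
      by (simp add: T_def)
    thus "x = y" using c by (simp add: mult_le_0_iff)
  qed
  define R where "R = T ` D"
  have subR: "csubspace R" unfolding csubspace_def R_def
  proof (intro conjI ballI allI)
    show "0 \<in> T ` D" using D0 A0 by (auto simp: T_def image_iff intro!: bexI[of _ 0])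
  next
    fix a b assume "a \<in> T ` D" "b \<in> T ` D"
    then obtain x y where "x \<in> D" "y \<in> D" "a = T x" "b = T y" by blast
    thus "a + b \<in> T ` D"
      by (intro image_eqI[of _ _ "x + y"]) (auto simp: T_def sa_add Dadd scaleC_add_right)
  next
    fix a and k :: complex assume "a \<in> T ` D"
    then obtain x where "x \<in> D" "a = T x" by blast
    thus "k *\<^sub>C a \<in> T ` D"
      by (intro image_eqI[of _ _ "k *\<^sub>C x"])
         (auto simp: T_def sa_sc Dsc cvs.scale_right_diff_distrib scaleC_scaleC mult.commute)
  qed
  have clR: "closed R" unfolding closed_sequential_limits
  proof (intro allI impI)
    fix s l assume a: "(\<forall>n. s n \<in> R) \<and> s \<longlonglongrightarrow> l"
    have "\<forall>n. \<exists>y. y \<in> D \<and> s n = T y" using a unfolding R_def by blast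
    then obtain x where x0: "\<forall>n. x n \<in> D \<and> s n = T (x n)" by metis
    hence x: "\<And>n. x n \<in> D" "\<And>n. s n = T (x n)" by auto
    have "Cauchy s" using a LIMSEQ_imp_Cauchy by blast
    have "Cauchy x"
    proof (rule metric_CauchyI)
      fix e :: real assume e: "e > 0"
      then obtain M where M: "\<And>m n. m \<ge> M \<Longrightarrow> n \<ge> M \<Longrightarrow> dist (s m) (s n) < c * e"
        using \<open>Cauchy s\<close> c unfolding Cauchy_def by (meson mult_pos_pos)
      show "\<exists>M. \<forall>m\<ge>M. \<forall>n\<ge>M. dist (x m) (x n) < e"
      proof (intro exI allI impI)
        fix m n assume "m \<ge> M" "n \<ge> M"
        hence "c * norm (x m - x n) < c * e"
          using bound[OF Ddiff[OF x(1) x(1)], of m n] Tdiff[OF x(1) x(1), of m n] M[of m n]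
          by (simp add: dist_norm x(2) T_def)
        thus "dist (x m) (x n) < e" using c by (simp add: dist_norm)
      qed
    qed
    then obtain y where y: "x \<longlonglongrightarrow> y" using Cauchy_convergent_iff convergent_def by blast
    have "y \<in> D \<and> A y = l + z *\<^sub>C y"
    proof (rule sa_adj)
      fix f assume f: "f \<in> D"
      have e: "cinner (x n) (A f) = cinner (s n + z *\<^sub>C x n) f" for n
        using sa_sym[OF x(1) f, of n] by (simp add: x(2) T_def)
      have "(\<lambda>n. cinner (x n) (A f)) \<longlonglongrightarrow> cinner y (A f)" by (rule tendsto_cinner_left[OF y])
      moreover have "(\<lambda>n. cinner (s n + z *\<^sub>C x n) f) \<longlonglongrightarrow> cinner (l + z *\<^sub>C y) f"
        using a tendsto_add[OF _ tendsto_scaleC[OF y]] by (intro tendsto_cinner_left) auto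
      ultimately show "cinner y (A f) = cinner (l + z *\<^sub>C y) f" unfolding e by (rule LIMSEQ_unique)
    qed
    thus "l \<in> R" unfolding R_def T_def by (intro image_eqI[of _ _ y]) auto
  qed
  have "R = UNIV"
  proof (rule ccontr)
    assume "R \<noteq> UNIV"
    then obtain v where v: "v \<notin> R" by blast
    obtain w where w: "w \<in> R" "\<And>y. y \<in> R \<Longrightarrow> cinner y (v - w) = 0"
      using closed_subspace_proj[OF subR clR, of v] by blast
    define h where "h = v - w"
    have h0: "h \<noteq> 0" using v w(1) by (auto simp: h_def)
    have "h \<in> D \<and> A h = cnj z *\<^sub>C h"
    proof (rule sa_adj)
      fix f assume f: "f \<in> D"
      have "cinner (T f) h = 0" using w(2) f unfolding R_def h_def by blast
      hence "cinner (A f) h = cnj z * cinner f h" by (simp add: T_def cinner_diff_left cinner_scaleC_left)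
      moreover have "cinner h (A f) = cnj (cinner (A f) h)" by (rule cinner_commute)
      moreover have "cinner h f = cnj (cinner f h)" by (rule cinner_commute)
      ultimately have "cinner h (A f) = z * cinner h f" by simp
      thus "cinner h (A f) = cinner (cnj z *\<^sub>C h) f" by (simp add: cinner_scaleC_left)
    qed
    hence "h = 0" using ker by blast
    thus False using h0 by simp
  qed
  thus ?thesis using injT unfolding bij_betw_def R_def T_def by simp
qed

lemma cinner_x_Ax_bound:
  assumes x: "x \<in> D"
  shows "\<bar>Im z\<bar> * norm x \<le> norm (A x - z *\<^sub>C x)"
proof -
  have "cinner x (A x - z *\<^sub>C x) = cinner x (A x) - z * complex_of_real ((norm x)^2)"
    by (simp add: cinner_diff_right cinner_scaleC_right cinner_self)
  hence "Im (cinner x (A x - z *\<^sub>C x)) = - Im z * (norm x)^2" using sa_real[OF x] by simp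
  hence "\<bar>Im (cinner x (A x - z *\<^sub>C x))\<bar> = \<bar>Im z\<bar> * (norm x)^2" by (simp add: abs_mult)
  hence "\<bar>Im z\<bar> * (norm x)^2 \<le> cmod (cinner x (A x - z *\<^sub>C x))"
    using abs_Im_le_cmod[of "cinner x (A x - z *\<^sub>C x)"] by linarith
  also have "\<dots> \<le> norm x * norm (A x - z *\<^sub>C x)" by (rule Cauchy_Schwarz)
  finally have "norm x * (\<bar>Im z\<bar> * norm x) \<le> norm x * norm (A x - z *\<^sub>C x)"
    by (simp add: power2_eq_square mult_ac)
  thus ?thesis by (cases "x = 0") (auto simp: mult_le_cancel_left)
qed

lemma spec_real:
  assumes "z \<in> op_spectrum D A" shows "Im z = 0"
proof (rule ccontr)
  assume nz: "Im z \<noteq> 0"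
  have "bij_betw (\<lambda>x. A x - z *\<^sub>C x) D UNIV"
  proof (rule bij_criterion[of "\<bar>Im z\<bar>"])
    show "\<bar>Im z\<bar> > 0" using nz by simp
    show "\<And>x. x \<in> D \<Longrightarrow> \<bar>Im z\<bar> * norm x \<le> norm (A x - z *\<^sub>C x)" by (rule cinner_x_Ax_bound)
    fix x assume x: "x \<in> D" "A x = cnj z *\<^sub>C x"
    have "\<bar>Im (cnj z)\<bar> * norm x \<le> 0" using cinner_x_Ax_bound[OF x(1), of "cnj z"] x(2) by simp
    thus "x = 0" using nz by (simp add: mult_le_0_iff)
  qed
  thus False using assms unfolding op_spectrum_def by blast
qed

lemma approx_eigen:
  assumes "complex_of_real t \<in> op_spectrum D A" "e > 0"
  shows "\<exists>u\<in>D. norm u = 1 \<and> norm (A u - complex_of_real t *\<^sub>C u) < e"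
proof (rule ccontr)
  assume "\<not> ?thesis"
  hence big: "\<And>u. u \<in> D \<Longrightarrow> norm u = 1 \<Longrightarrow> e \<le> norm (A u - complex_of_real t *\<^sub>C u)" by force
  have bound: "e * norm x \<le> norm (A x - complex_of_real t *\<^sub>C x)" if x: "x \<in> D" for x
  proof (cases "x = 0")
    case True thus ?thesis by simp
  next
    case False
    define u where "u = complex_of_real (1 / norm x) *\<^sub>C x"
    have u: "u \<in> D" "norm u = 1" using x False by (auto simp: u_def Dsc norm_scaleC norm_divide)
    have "A u - complex_of_real t *\<^sub>C u = complex_of_real (1 / norm x) *\<^sub>C (A x - complex_of_real t *\<^sub>C x)"
      using x by (simp add: u_def sa_sc cvs.scale_right_diff_distrib scaleC_scaleC mult.commute)
    hence "norm (A u - complex_of_real t *\<^sub>C u) = norm (A x - complex_of_real t *\<^sub>C x) / norm x"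
      by (simp add: norm_scaleC norm_divide)
    with big[OF u] False show ?thesis by (simp add: field_simps)
  qed
  have "bij_betw (\<lambda>x. A x - complex_of_real t *\<^sub>C x) D UNIV"
  proof (rule bij_criterion[OF assms(2) bound])
    fix x assume x: "x \<in> D" "A x = cnj (complex_of_real t) *\<^sub>C x"
    have "e * norm x \<le> 0" using bound[OF x(1)] x(2) by simp
    thus "x = 0" using assms(2) by (simp add: mult_le_0_iff)
  qed
  thus False using assms(1) unfolding op_spectrum_def by blast
qed

lemma weak_limit_eigen:
  assumes u: "\<And>k. u k \<in> D" and w: "weakly_to u w"
    and r: "(\<lambda>k. A (u k) - complex_of_real t *\<^sub>C u k) \<longlonglongrightarrow> 0"
  shows "w \<in> D \<and> A w = complex_of_real t *\<^sub>C w"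
proof (rule eig_from_form)
  fix f assume f: "f \<in> D"
  have e: "cinner (A f) (u k) = cinner f (A (u k) - complex_of_real t *\<^sub>C u k) + complex_of_real t * cinner f (u k)" for k
    using sa_sym[OF f u] by (simp add: cinner_diff_right cinner_scaleC_right)
  have "(\<lambda>k. cinner (A f) (u k)) \<longlonglongrightarrow> cinner (A f) w" using w unfolding weakly_to_def by blast
  moreover have "(\<lambda>k. cinner f (A (u k) - complex_of_real t *\<^sub>C u k) + complex_of_real t * cinner f (u k))
      \<longlonglongrightarrow> cinner f 0 + complex_of_real t * cinner f w"
  proof (intro tendsto_add tendsto_mult tendsto_const)
    show "(\<lambda>k. cinner f (A (u k) - complex_of_real t *\<^sub>C u k)) \<longlonglongrightarrow> cinner f 0"
      by (rule tendsto_cinner_right[OF r])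
    show "(\<lambda>k. cinner f (u k)) \<longlonglongrightarrow> cinner f w" using w unfolding weakly_to_def by blast
  qed
  ultimately show "cinner (A f) w = complex_of_real t * cinner f w" unfolding e by (simp add: LIMSEQ_unique)
qed

end

lemma onseq_weak_null:
  fixes e :: "nat \<Rightarrow> 'a::complex_inner"
  assumes n1: "\<And>k. norm (e k) = 1" and orth: "\<And>j k. j \<noteq> k \<Longrightarrow> cinner (e j) (e k) = 0"
  shows "weakly_to e 0"
  unfolding weakly_to_def
proof
  fix y
  have inj: "inj e"
  proof (rule injI)
    fix j k assume "e j = e k"
    thus "j = k" using orth[of j k] n1[of k] cinner_self_norm1[of "e k"] by (cases "j = k") auto
  qed
  define f where "f k = (cmod (cinner (e k) y))^2" for k
  have ortho: "orthonormal (e ` {..<N})" for N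
    unfolding orthonormal_def using n1 by (auto intro: orth)
  have "sum f {..<N} \<le> (norm y)^2" for N
  proof -
    have "sum f {..<N} = (\<Sum>x\<in>e ` {..<N}. (cmod (cinner x y))^2)"
      unfolding f_def by (subst sum.reindex) (use inj in \<open>auto simp: inj_on_def\<close>)
    also have "\<dots> \<le> (norm y)^2" by (rule bessel[OF _ ortho]) simp
    finally show ?thesis .
  qed
  hence "summable f" by (intro summableI_nonneg_bounded[of f]) (auto simp: f_def)
  hence "f \<longlonglongrightarrow> 0" by (rule summable_LIMSEQ_zero)
  hence "(\<lambda>k. sqrt (f k)) \<longlonglongrightarrow> sqrt 0" by (intro tendsto_real_sqrt)
  hence "(\<lambda>k. norm (cinner y (e k))) \<longlonglongrightarrow> 0"
    by (simp add: f_def cinner_commute[of y])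
  thus "(\<lambda>k. cinner y (e k)) \<longlonglongrightarrow> cinner y 0" by (simp add: tendsto_norm_zero_iff)
qed

lemma nxt_ex:
  fixes E :: "'a::complex_inner set"
  assumes sub: "csubspace E" and inf: "\<not> cfinite_dim E" and F: "finite F" "orthonormal F" "F \<subseteq> E"
  shows "\<exists>e. e \<in> E \<and> norm e = 1 \<and> (\<forall>f\<in>F. cinner f e = 0)"
proof -
  have sE: "cvs.subspace E" using sub csubspace_eq by blast
  have spF: "cvs.span F \<subseteq> E" using cvs.span_minimal[OF F(3) sE] .
  have "cvs.span F \<noteq> E" using inf F(1) unfolding cfinite_dim_def cspan_eq by blast
  then obtain b where b: "b \<in> E" "b \<notin> cvs.span F" using spF by blast
  define r where "r = b - fproj F b"
  have rE: "r \<in> E" unfolding r_def using b(1) fproj_in_span[of F b] spF sE cvs.subspace_diff by blast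
  have r0: "r \<noteq> 0" using b(2) fproj_in_span[of F b] by (auto simp: r_def)
  have ro: "cinner f r = 0" if "f \<in> F" for f
    unfolding r_def using F that by (simp add: cinner_diff_right cinner_fproj)
  define e where "e = complex_of_real (1 / norm r) *\<^sub>C r"
  show ?thesis
    using rE r0 ro sE by (intro exI[of _ e]) (auto simp: e_def norm_scaleC norm_divide cinner_scaleC_right cvs.subspace_scale)
qed

definition nxt :: "'a::complex_inner set \<Rightarrow> 'a set \<Rightarrow> 'a" where
  "nxt E F = (SOME e. e \<in> E \<and> norm e = 1 \<and> (\<forall>f\<in>F. cinner f e = 0))"

primrec Sq :: "'a::complex_inner set \<Rightarrow> nat \<Rightarrow> 'a set" where
  "Sq E 0 = {}" | "Sq E (Suc n) = insert (nxt E (Sq E n)) (Sq E n)"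

lemma inf_dim_onseq:
  fixes E :: "'a::complex_inner set"
  assumes sub: "csubspace E" and inf: "\<not> cfinite_dim E"
  shows "\<exists>e::nat \<Rightarrow> 'a. (\<forall>k. e k \<in> E \<and> norm (e k) = 1) \<and> (\<forall>j k. j \<noteq> k \<longrightarrow> cinner (e j) (e k) = 0)"
proof -
  have nx: "nxt E F \<in> E \<and> norm (nxt E F) = 1 \<and> (\<forall>f\<in>F. cinner f (nxt E F) = 0)"
    if "finite F" "orthonormal F" "F \<subseteq> E" for F
    unfolding nxt_def by (rule someI_ex[OF nxt_ex[OF sub inf that]])
  have inv: "finite (Sq E n) \<and> orthonormal (Sq E n) \<and> Sq E n \<subseteq> E" for n
  proof (induction n)
    case 0 thus ?case by (simp add: orthonormal_def)
  next
    case (Suc n)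
    have IH: "finite (Sq E n)" "orthonormal (Sq E n)" "Sq E n \<subseteq> E" using Suc.IH by auto
    note NN = nx[OF IH]
    have N: "nxt E (Sq E n) \<in> E" "norm (nxt E (Sq E n)) = 1" "\<forall>f\<in>Sq E n. cinner f (nxt E (Sq E n)) = 0"
      using NN by auto
    have N2: "\<forall>f\<in>Sq E n. cinner (nxt E (Sq E n)) f = 0"
    proof
      fix f assume "f \<in> Sq E n"
      hence "cinner f (nxt E (Sq E n)) = 0" using N(3) by blast
      thus "cinner (nxt E (Sq E n)) f = 0" using cinner_commute[of "nxt E (Sq E n)" f] by simp
    qed
    have "orthonormal (insert (nxt E (Sq E n)) (Sq E n))"
      using IH(2) N(2,3) N2 unfolding orthonormal_def by blast
    thus ?case using IH N(1) by simp
  qed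
  have mono: "Sq E j \<subseteq> Sq E k" if "j \<le> k" for j k
    using that
  proof (induction k)
    case 0 thus ?case by simp
  next
    case (Suc k) thus ?case by (cases "j = Suc k") auto
  qed
  define e where "e k = nxt E (Sq E k)" for k
  have eprops: "e k \<in> E \<and> norm (e k) = 1 \<and> (\<forall>f\<in>Sq E k. cinner f (e k) = 0)" for k
    unfolding e_def by (rule nx) (use inv[of k] in auto)
  have lt: "cinner (e j) (e k) = 0" if "j < k" for j k
  proof -
    have "e j \<in> Sq E (Suc j)" by (simp add: e_def)
    moreover have "Sq E (Suc j) \<subseteq> Sq E k" using mono[of "Suc j" k] that by simp
    ultimately have "e j \<in> Sq E k" by blast
    moreover have "\<forall>f\<in>Sq E k. cinner f (e k) = 0" using eprops[of k] by simp
    ultimately show ?thesis by blast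
  qed
  have oo: "cinner (e j) (e k) = 0" if "j \<noteq> k" for j k
  proof (cases "j < k")
    case True thus ?thesis by (rule lt)
  next
    case False
    hence "k < j" using that by simp
    hence "cinner (e k) (e j) = 0" by (rule lt)
    thus ?thesis using cinner_commute[of "e j" "e k"] by simp
  qed
  have pp: "\<forall>k. e k \<in> E \<and> norm (e k) = 1" using eprops by simp
  have "(\<forall>k. e k \<in> E \<and> norm (e k) = 1) \<and> (\<forall>j k. j \<noteq> k \<longrightarrow> cinner (e j) (e k) = 0)"
    using oo pp by simp
  thus ?thesis by blast
qed

definition weyl :: "'a::complex_inner set \<Rightarrow> ('a \<Rightarrow> 'a) \<Rightarrow> real \<Rightarrow> bool" where
  "weyl D A t \<longleftrightarrow> (\<exists>u. (\<forall>k. u k \<in> D \<and> norm (u k) = 1) \<and> weakly_to u 0 \<and>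
      (\<lambda>k. A (u k) - complex_of_real t *\<^sub>C u k) \<longlonglongrightarrow> 0)"

lemma eigenspace_sub:
  fixes D :: "'a::{complex_inner, complete_space} set"
  assumes sa: "selfadjoint D A"
  shows "csubspace {x \<in> D. A x = c *\<^sub>C x}"
  unfolding csubspace_def
  using D0[OF sa] A0[OF sa] Dadd[OF sa] sa_add[OF sa] Dsc[OF sa] sa_sc[OF sa]
  by (auto simp: scaleC_add_right scaleC_scaleC mult.commute)

lemma weyl_from_approx:
  fixes D :: "'a::{complex_inner, complete_space} set"
  assumes sa: "selfadjoint D A" and sep: "separable_space TYPE('a)"
    and v: "\<And>k. v k \<in> D" "\<And>k. norm (v k) = 1"
    and r: "(\<lambda>k. A (v k) - complex_of_real t *\<^sub>C v k) \<longlonglongrightarrow> 0"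
    and orth: "\<And>e. e \<in> D \<Longrightarrow> A e = complex_of_real t *\<^sub>C e \<Longrightarrow> (\<lambda>k. cinner e (v k)) \<longlonglongrightarrow> 0"
  shows "weyl D A t"
proof -
  have "\<exists>s w. strict_mono s \<and> weakly_to (v \<circ> s) w"
    by (rule weak_compact[OF sep, of v 1]) (simp add: v(2))
  then obtain s w where s: "strict_mono s" "weakly_to (v \<circ> s) w" by blast
  have r2: "(\<lambda>k. A ((v \<circ> s) k) - complex_of_real t *\<^sub>C (v \<circ> s) k) \<longlonglongrightarrow> 0"
    using LIMSEQ_subseq_LIMSEQ[OF r s(1)] by (simp add: o_def)
  have w: "w \<in> D \<and> A w = complex_of_real t *\<^sub>C w"
    by (rule weak_limit_eigen[OF sa _ s(2) r2]) (simp add: v)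
  have "(\<lambda>k. cinner w ((v \<circ> s) k)) \<longlonglongrightarrow> 0"
    using LIMSEQ_subseq_LIMSEQ[OF orth[OF conjunct1[OF w] conjunct2[OF w]] s(1)] by (simp add: o_def)
  moreover have "(\<lambda>k. cinner w ((v \<circ> s) k)) \<longlonglongrightarrow> cinner w w" using s(2) unfolding weakly_to_def by blast
  ultimately have "cinner w w = 0" using LIMSEQ_unique by blast
  hence "w = 0" by simp
  hence wk: "weakly_to (v \<circ> s) 0" using s(2) by simp
  have vs: "\<forall>k. (v \<circ> s) k \<in> D \<and> norm ((v \<circ> s) k) = 1" using v by simp
  show ?thesis unfolding weyl_def using vs wk r2 by blast
qed

lemma inverse_bound_null:
  assumes "\<And>k. norm (f k) \<le> c * inverse (real (Suc k))"
  shows "f \<longlonglongrightarrow> 0"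
proof -
  have "(\<lambda>k. c * inverse (real (Suc k))) \<longlonglongrightarrow> c * 0"
    by (intro tendsto_mult tendsto_const LIMSEQ_inverse_real_of_nat)
  hence lim: "(\<lambda>k. c * inverse (real (Suc k))) \<longlonglongrightarrow> 0" by simp
  show ?thesis by (rule Lim_null_comparison[OF _ lim]) (use assms in simp)
qed

lemma weyl_main:
  fixes D :: "'a::{complex_inner, complete_space} set"
  assumes sa: "selfadjoint D A" and sep: "separable_space TYPE('a)"
    and t: "complex_of_real t \<in> op_spectrum D A"
    and cases: "\<not> (\<exists>e>0. ball (complex_of_real t) e \<inter> op_spectrum D A = {complex_of_real t})
       \<or> {x \<in> D. A x = complex_of_real t *\<^sub>C x} = {0}
       \<or> \<not> cfinite_dim {x \<in> D. A x = complex_of_real t *\<^sub>C x}"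
  shows "weyl D A t"
proof -
  define E where "E = {x \<in> D. A x = complex_of_real t *\<^sub>C x}"
  consider (ni) "\<not> (\<exists>e>0. ball (complex_of_real t) e \<inter> op_spectrum D A = {complex_of_real t})"
    | (z) "E = {0}" | (inf) "\<not> cfinite_dim E" using cases unfolding E_def by blast
  thus ?thesis
  proof cases
    case inf
    have subE: "csubspace E" unfolding E_def by (rule eigenspace_sub[OF sa])
    from inf_dim_onseq[OF subE inf]
    obtain e :: "nat \<Rightarrow> 'a" where e0: "(\<forall>k. e k \<in> E \<and> norm (e k) = 1) \<and> (\<forall>j k. j \<noteq> k \<longrightarrow> cinner (e j) (e k) = 0)"
      by (elim exE)
    have e1: "\<And>k. e k \<in> D" "\<And>k. A (e k) = complex_of_real t *\<^sub>C e k" "\<And>k. norm (e k) = 1"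
      using e0 unfolding E_def by auto
    have e2: "\<And>j k. j \<noteq> k \<Longrightarrow> cinner (e j) (e k) = 0" using e0 by blast
    have wk: "weakly_to e 0" by (rule onseq_weak_null[OF e1(3) e2])
    have r: "(\<lambda>k. A (e k) - complex_of_real t *\<^sub>C e k) \<longlonglongrightarrow> 0" using e1(2) by simp
    show ?thesis unfolding weyl_def using e1(1,3) wk r by blast
  next
    case z
    have "\<forall>k. \<exists>v. v \<in> D \<and> norm v = 1 \<and> norm (A v - complex_of_real t *\<^sub>C v) < inverse (real (Suc k))"
    proof
      fix k :: nat
      have "inverse (real (Suc k)) > 0" by simp
      from approx_eigen[OF sa t this]
      show "\<exists>v. v \<in> D \<and> norm v = 1 \<and> norm (A v - complex_of_real t *\<^sub>C v) < inverse (real (Suc k))" by blast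
    qed
    then obtain v where v0: "\<forall>k. v k \<in> D \<and> norm (v k) = 1 \<and> norm (A (v k) - complex_of_real t *\<^sub>C v k) < inverse (real (Suc k))"
      using choice[of "\<lambda>k v. v \<in> D \<and> norm v = 1 \<and> norm (A v - complex_of_real t *\<^sub>C v) < inverse (real (Suc k))"] by blast
    hence v: "\<And>k. v k \<in> D" "\<And>k. norm (v k) = 1"
       "\<And>k. norm (A (v k) - complex_of_real t *\<^sub>C v k) < inverse (real (Suc k))" by auto
    show ?thesis
    proof (rule weyl_from_approx[OF sa sep v(1,2)])
      show "(\<lambda>k. A (v k) - complex_of_real t *\<^sub>C v k) \<longlonglongrightarrow> 0"
        by (rule inverse_bound_null[of _ 1]) (use v(3) less_imp_le in auto)
      fix e assume "e \<in> D" "A e = complex_of_real t *\<^sub>C e"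
      hence "e = 0" using z unfolding E_def by blast
      thus "(\<lambda>k. cinner e (v k)) \<longlonglongrightarrow> 0" by simp
    qed
  next
    case ni
    define Q where "Q k p \<longleftrightarrow> fst p \<noteq> t \<and> \<bar>fst p - t\<bar> < inverse (real (Suc k)) \<and> snd p \<in> D \<and> norm (snd p) = 1 \<and>
        norm (A (snd p) - complex_of_real (fst p) *\<^sub>C snd p) < \<bar>fst p - t\<bar> * inverse (real (Suc k))" for k p
    have "\<exists>p. Q k p" for k
    proof -
      have pos: "inverse (real (Suc k)) > 0" by simp
      define S where "S = ball (complex_of_real t) (inverse (real (Suc k))) \<inter> op_spectrum D A"
      have "S \<noteq> {complex_of_real t}" using ni pos unfolding S_def by blast
      moreover have "complex_of_real t \<in> S" using t pos unfolding S_def by simp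
      ultimately have "\<exists>\<mu>\<in>S. \<mu> \<noteq> complex_of_real t" by blast
      then obtain \<mu> where mu0: "\<mu> \<in> S" "\<mu> \<noteq> complex_of_real t" by blast
      have mu: "\<mu> \<in> op_spectrum D A" "dist (complex_of_real t) \<mu> < inverse (real (Suc k))"
        "\<mu> \<noteq> complex_of_real t" using mu0 unfolding S_def by auto
      define m where "m = Re \<mu>"
      have mu_eq: "\<mu> = complex_of_real m" using spec_real[OF sa mu(1)] by (simp add: m_def complex_eq_iff)
      have mt: "m \<noteq> t" using mu(3) mu_eq by auto
      have mtk: "\<bar>m - t\<bar> < inverse (real (Suc k))"
        using mu(2) unfolding mu_eq dist_of_real by (simp add: dist_real_def abs_minus_commute)
      have "\<bar>m - t\<bar> * inverse (real (Suc k)) > 0" using mt by simp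
      from approx_eigen[OF sa mu(1)[unfolded mu_eq] this]
      obtain v where "v \<in> D" "norm v = 1" "norm (A v - complex_of_real m *\<^sub>C v) < \<bar>m - t\<bar> * inverse (real (Suc k))"
        by blast
      hence "Q k (m, v)" using mt mtk unfolding Q_def by simp
      thus ?thesis by blast
    qed
    then obtain p where p: "\<forall>k. Q k (p k)" using choice[of Q] by blast
    define m where "m k = fst (p k)" for k
    define v where "v k = snd (p k)" for k
    have mv: "\<And>k. m k \<noteq> t" "\<And>k. \<bar>m k - t\<bar> < inverse (real (Suc k))"
      "\<And>k. v k \<in> D" "\<And>k. norm (v k) = 1"
      "\<And>k. norm (A (v k) - complex_of_real (m k) *\<^sub>C v k) < \<bar>m k - t\<bar> * inverse (real (Suc k))"
      using p unfolding Q_def m_def v_def by auto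
    show ?thesis
    proof (rule weyl_from_approx[OF sa sep mv(3,4)])
      show "(\<lambda>k. A (v k) - complex_of_real t *\<^sub>C v k) \<longlonglongrightarrow> 0"
      proof (rule inverse_bound_null[of _ 2])
        fix k
        have eq: "A (v k) - complex_of_real t *\<^sub>C v k =
            (A (v k) - complex_of_real (m k) *\<^sub>C v k) + complex_of_real (m k - t) *\<^sub>C v k"
          by (simp add: scaleC_add_left[symmetric] algebra_simps)
        have cm: "cmod (complex_of_real (m k) - complex_of_real t) = \<bar>m k - t\<bar>"
          by (simp only: of_real_diff[symmetric] norm_of_real)
        have "norm (A (v k) - complex_of_real t *\<^sub>C v k) \<le>
            norm (A (v k) - complex_of_real (m k) *\<^sub>C v k) + \<bar>m k - t\<bar>"
          unfolding eq using cm using norm_triangle_ineq[of "A (v k) - complex_of_real (m k) *\<^sub>C v k"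
              "complex_of_real (m k - t) *\<^sub>C v k"] by (simp add: norm_scaleC mv(4))
        also have "\<dots> \<le> \<bar>m k - t\<bar> * inverse (real (Suc k)) + inverse (real (Suc k))"
          using mv(5)[of k] mv(2)[of k] by linarith
        also have "\<dots> \<le> 2 * inverse (real (Suc k))"
        proof -
          have "\<bar>m k - t\<bar> * inverse (real (Suc k)) \<le> 1 * inverse (real (Suc k))"
          proof (rule mult_right_mono)
            have "inverse (real (Suc k)) \<le> 1" by (simp add: inverse_le_1_iff)
            thus "\<bar>m k - t\<bar> \<le> 1" using mv(2)[of k] by linarith
          qed simp
          thus ?thesis by simp
        qed
        finally show "norm (A (v k) - complex_of_real t *\<^sub>C v k) \<le> 2 * inverse (real (Suc k))" .
      qed
      fix e assume e: "e \<in> D" "A e = complex_of_real t *\<^sub>C e"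
      show "(\<lambda>k. cinner e (v k)) \<longlonglongrightarrow> 0"
      proof (rule inverse_bound_null[of _ "norm e"])
        fix k
        have "cinner e (A (v k) - complex_of_real (m k) *\<^sub>C v k) = complex_of_real (t - m k) * cinner e (v k)"
          using sa_sym[OF sa e(1) mv(3)[of k]] e(2)
          by (simp add: cinner_diff_right cinner_scaleC_right cinner_scaleC_left algebra_simps)
        hence "\<bar>t - m k\<bar> * cmod (cinner e (v k)) \<le> norm e * (\<bar>m k - t\<bar> * inverse (real (Suc k)))"
        proof -
          assume h: "cinner e (A (v k) - complex_of_real (m k) *\<^sub>C v k) = complex_of_real (t - m k) * cinner e (v k)"
          have "\<bar>t - m k\<bar> * cmod (cinner e (v k)) = cmod (cinner e (A (v k) - complex_of_real (m k) *\<^sub>C v k))"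
            unfolding h norm_mult norm_of_real ..
          also have "\<dots> \<le> norm e * norm (A (v k) - complex_of_real (m k) *\<^sub>C v k)" by (rule Cauchy_Schwarz)
          also have "\<dots> \<le> norm e * (\<bar>m k - t\<bar> * inverse (real (Suc k)))"
            using mv(5)[of k] by (intro mult_left_mono) auto
          finally show ?thesis .
        qed
        hence "\<bar>m k - t\<bar> * cmod (cinner e (v k)) \<le> \<bar>m k - t\<bar> * (norm e * inverse (real (Suc k)))"
          by (simp add: abs_minus_commute mult_ac)
        moreover have "\<bar>m k - t\<bar> > 0" using mv(1)[of k] by simp
        ultimately show "norm (cinner e (v k)) \<le> norm e * inverse (real (Suc k))"
          by (simp add: mult_le_cancel_left_pos)
      qed
    qed
  qed
qed

lemma ge_filterlim: "(\<And>k. k \<le> n k) \<Longrightarrow> filterlim n at_top sequentially"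
  by (rule filterlim_at_top_mono[OF filterlim_ident]) simp

lemma normalize_in:
  assumes "cfinite_dim V" "y \<in> V" shows "complex_of_real (1 / norm y) *\<^sub>C y \<in> V"
  using cfinite_dim_subspace[OF assms(1)] assms(2) by (rule cvs.subspace_scale)

locale gframe =
  fixes D :: "'a::{complex_inner, complete_space} set" and A :: "'a \<Rightarrow> 'a"
    and L :: "nat \<Rightarrow> 'a set" and An :: "nat \<Rightarrow> 'a \<Rightarrow> 'a"
  assumes sa: "selfadjoint D A" and sep: "separable_space TYPE('a)"
    and fd: "\<And>n. cfinite_dim (L n)"
    and Amap: "\<And>n x. x \<in> L n \<Longrightarrow> An n x \<in> L n"
    and Aadd: "\<And>n x y. x \<in> L n \<Longrightarrow> y \<in> L n \<Longrightarrow> An n (x + y) = An n x + An n y"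
    and Asc: "\<And>n c x. x \<in> L n \<Longrightarrow> An n (c *\<^sub>C x) = c *\<^sub>C An n x"
    and transfer: "\<And>u t e N. u \<in> D \<Longrightarrow> e > 0 \<Longrightarrow> \<exists>n\<ge>N. \<exists>x\<in>L n. norm (x - u) \<le> e \<and>
        norm (An n x - complex_of_real t *\<^sub>C x) \<le> norm (A u - complex_of_real t *\<^sub>C u) + e"
    and eiglim: "\<And>nk x lk t w. filterlim nk at_top sequentially \<Longrightarrow>
        (\<forall>k. x k \<in> L (nk k) \<and> norm (x k) = 1 \<and> An (nk k) (x k) = lk k *\<^sub>C x k) \<Longrightarrow>
        lk \<longlonglongrightarrow> complex_of_real t \<Longrightarrow> weakly_to x w \<Longrightarrow> w \<in> D \<and> A w = complex_of_real t *\<^sub>C w"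
begin

lemma weyl_lim_ess:
  assumes "weyl D A t" shows "t \<in> lim_ess_spectrum L An"
proof -
  obtain u where u: "\<forall>k. u k \<in> D \<and> norm (u k) = 1" "weakly_to u 0"
    "(\<lambda>k. A (u k) - complex_of_real t *\<^sub>C u k) \<longlonglongrightarrow> 0"
    using assms unfolding weyl_def by blast
  define \<epsilon> where "\<epsilon> k = inverse (real (Suc k)) / 2" for k
  have \<epsilon>pos: "\<epsilon> k > 0" for k by (simp add: \<epsilon>_def)
  have \<epsilon>le: "\<epsilon> k \<le> 1/2" for k by (simp add: \<epsilon>_def inverse_le_1_iff)
  define Q where "Q k p \<longleftrightarrow> fst p \<ge> k \<and> snd p \<in> L (fst p) \<and> norm (snd p - u k) \<le> \<epsilon> k \<and>
     norm (An (fst p) (snd p) - complex_of_real t *\<^sub>C snd p) \<le> norm (A (u k) - complex_of_real t *\<^sub>C u k) + \<epsilon> k"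
    for k p
  have "\<exists>p. Q k p" for k
  proof -
    from transfer[of "u k" "\<epsilon> k" k t] u(1) \<epsilon>pos
    obtain n x where "n \<ge> k" "x \<in> L n" "norm (x - u k) \<le> \<epsilon> k"
      "norm (An n x - complex_of_real t *\<^sub>C x) \<le> norm (A (u k) - complex_of_real t *\<^sub>C u k) + \<epsilon> k" by blast
    hence "Q k (n, x)" unfolding Q_def by simp
    thus ?thesis by blast
  qed
  then obtain p where p: "\<forall>k. Q k (p k)" using choice[of Q] by blast
  define n where "n k = fst (p k)" for k
  define y where "y k = snd (p k)" for k
  have ny: "n k \<ge> k" "y k \<in> L (n k)" "norm (y k - u k) \<le> \<epsilon> k"
    "norm (An (n k) (y k) - complex_of_real t *\<^sub>C y k) \<le> norm (A (u k) - complex_of_real t *\<^sub>C u k) + \<epsilon> k"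
    for k using p unfolding Q_def n_def y_def by auto
  have ny1: "\<bar>norm (y k) - 1\<bar> \<le> \<epsilon> k" for k
    using norm_triangle_ineq3[of "y k" "u k"] ny(3)[of k] u(1) by simp
  have ypos: "norm (y k) \<ge> 1/2" for k
  proof -
    have "norm (y k) - 1 \<ge> - \<epsilon> k" using ny1[of k] by (simp add: abs_le_iff)
    thus ?thesis using \<epsilon>le[of k] by linarith
  qed
  define x where "x k = complex_of_real (1 / norm (y k)) *\<^sub>C y k" for k
  have xL: "x k \<in> L (n k)" for k unfolding x_def by (rule normalize_in[OF fd ny(2)])
  have yn0: "y k \<noteq> 0" for k using ypos[of k] by auto
  have xn: "norm (x k) = 1" for k using yn0[of k] by (simp add: x_def norm_scaleC norm_divide)
  have res: "An (n k) (x k) - complex_of_real t *\<^sub>C x k =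
      complex_of_real (1 / norm (y k)) *\<^sub>C (An (n k) (y k) - complex_of_real t *\<^sub>C y k)" for k
    unfolding x_def Asc[OF ny(2)] by (simp add: cvs.scale_right_diff_distrib scaleC_scaleC mult.commute)
  have resb: "norm (An (n k) (x k) - complex_of_real t *\<^sub>C x k) \<le>
      2 * (norm (A (u k) - complex_of_real t *\<^sub>C u k) + \<epsilon> k)" for k
  proof -
    have "norm (An (n k) (x k) - complex_of_real t *\<^sub>C x k) =
        norm (An (n k) (y k) - complex_of_real t *\<^sub>C y k) / norm (y k)"
      unfolding res using ypos[of k] by (simp add: norm_scaleC norm_divide)
    also have "\<dots> \<le> 2 * norm (An (n k) (y k) - complex_of_real t *\<^sub>C y k)"
    proof -
      define N where "N = norm (An (n k) (y k) - complex_of_real t *\<^sub>C y k)"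
      have b: "norm (y k) > 0" using yn0[of k] by simp
      have "N * 1 \<le> N * (2 * norm (y k))" by (rule mult_left_mono) (use ypos[of k] in \<open>auto simp: N_def\<close>)
      hence "N / norm (y k) \<le> 2 * N" using b by (simp add: divide_le_eq mult_ac)
      thus ?thesis by (simp add: N_def)
    qed
    also have "\<dots> \<le> 2 * (norm (A (u k) - complex_of_real t *\<^sub>C u k) + \<epsilon> k)" using ny(4)[of k] by simp
    finally show ?thesis .
  qed
  have \<epsilon>lim: "\<epsilon> \<longlonglongrightarrow> 0"
    unfolding \<epsilon>_def using tendsto_divide[OF LIMSEQ_inverse_real_of_nat tendsto_const[of 2]] by simp
  have lim1: "(\<lambda>k. An (n k) (x k) - complex_of_real t *\<^sub>C x k) \<longlonglongrightarrow> 0"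
  proof (rule Lim_null_comparison)
    show "\<forall>\<^sub>F k in sequentially. norm (An (n k) (x k) - complex_of_real t *\<^sub>C x k) \<le>
        2 * (norm (A (u k) - complex_of_real t *\<^sub>C u k) + \<epsilon> k)" using resb by simp
    have "(\<lambda>k. 2 * (norm (A (u k) - complex_of_real t *\<^sub>C u k) + \<epsilon> k)) \<longlonglongrightarrow> 2 * (norm (0::'a) + 0)"
      by (intro tendsto_intros u(3) \<epsilon>lim)
    thus "(\<lambda>k. 2 * (norm (A (u k) - complex_of_real t *\<^sub>C u k) + \<epsilon> k)) \<longlonglongrightarrow> 0" by simp
  qed
  have xu: "norm (x k - u k) \<le> 2 * \<epsilon> k" for k
  proof -
    have "x k - y k = complex_of_real (1 / norm (y k) - 1) *\<^sub>C y k"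
      by (simp add: x_def scaleC_add_left[symmetric] algebra_simps scaleC_one
          cvs.scale_left_diff_distrib)
    hence "norm (x k - y k) = \<bar>1 / norm (y k) - 1\<bar> * norm (y k)" by (simp only: norm_scaleC norm_of_real)
    also have "\<dots> = \<bar>norm (y k) - 1\<bar>"
    proof -
      have a: "norm (y k) > 0" using yn0[of k] by simp
      have e1: "(1 / norm (y k) - 1) * norm (y k) = 1 - norm (y k)" using a by (simp add: field_simps)
      have "\<bar>1 / norm (y k) - 1\<bar> * norm (y k) = \<bar>(1 / norm (y k) - 1) * norm (y k)\<bar>"
        using a by (simp add: abs_mult)
      thus ?thesis unfolding e1 by (simp add: abs_minus_commute)
    qed
    finally have "norm (x k - y k) \<le> \<epsilon> k" using ny1[of k] by simp
    moreover have "norm (x k - u k) \<le> norm (x k - y k) + norm (y k - u k)"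
      using norm_triangle_ineq[of "x k - y k" "y k - u k"] by simp
    ultimately show ?thesis using ny(3)[of k] by simp
  qed
  have "(\<lambda>k. x k - u k) \<longlonglongrightarrow> 0"
  proof (rule Lim_null_comparison)
    show "\<forall>\<^sub>F k in sequentially. norm (x k - u k) \<le> 2 * \<epsilon> k" using xu by simp
    show "(\<lambda>k. 2 * \<epsilon> k) \<longlonglongrightarrow> 0" using tendsto_mult[OF tendsto_const[of 2] \<epsilon>lim] by simp
  qed
  hence wx: "weakly_to x 0" by (rule norm_tendsto_weakly[OF _ u(2)])
  have "filterlim n at_top sequentially" by (rule ge_filterlim[OF ny(1)])
  thus ?thesis unfolding lim_ess_spectrum_def using xL xn wx lim1 by blast
qed

lemma ess_sub: "ess_spectrum D A \<subseteq> complex_of_real ` lim_ess_spectrum L An"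
proof
  fix z assume z: "z \<in> ess_spectrum D A"
  hence zs: "z \<in> op_spectrum D A" and zd: "z \<notin> disc_spectrum D A" unfolding ess_spectrum_def by auto
  define t where "t = Re z"
  have zt: "z = complex_of_real t" using spec_real[OF sa zs] by (simp add: t_def complex_eq_iff)
  have "weyl D A t"
  proof (rule weyl_main[OF sa sep])
    show "complex_of_real t \<in> op_spectrum D A" using zs zt by simp
    show "\<not> (\<exists>e>0. ball (complex_of_real t) e \<inter> op_spectrum D A = {complex_of_real t})
       \<or> {x \<in> D. A x = complex_of_real t *\<^sub>C x} = {0}
       \<or> \<not> cfinite_dim {x \<in> D. A x = complex_of_real t *\<^sub>C x}"
      using zd zs unfolding zt disc_spectrum_def by blast
  qed
  hence "t \<in> lim_ess_spectrum L An" by (rule weyl_lim_ess)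
  thus "z \<in> complex_of_real ` lim_ess_spectrum L An" using zt by simp
qed

lemma disc_sub: "complex_of_real ` lim_disc_spectrum L An \<subseteq> disc_spectrum D A"
proof
  fix z assume "z \<in> complex_of_real ` lim_disc_spectrum L An"
  then obtain t where zt: "z = complex_of_real t" and ts: "t \<in> lim_spectrum L An"
    and tne: "t \<notin> lim_ess_spectrum L An" unfolding lim_disc_spectrum_def by blast
  obtain nk lk where nk: "filterlim nk at_top sequentially"
    and lk: "\<And>k. lk k \<in> fin_spectrum (L (nk k)) (An (nk k))" and lkt: "lk \<longlonglongrightarrow> complex_of_real t"
    using ts unfolding lim_spectrum_def by blast
  have "\<exists>x. x \<in> L (nk k) \<and> norm x = 1 \<and> An (nk k) x = lk k *\<^sub>C x" for k
  proof -
    obtain y where y: "y \<in> L (nk k)" "y \<noteq> 0" "An (nk k) y = lk k *\<^sub>C y"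
      using fin_spec_eigen[OF fd lk[of k] Amap Aadd Asc] by blast
    define x where "x = complex_of_real (1 / norm y) *\<^sub>C y"
    have "x \<in> L (nk k)" unfolding x_def by (rule normalize_in[OF fd y(1)])
    moreover have "norm x = 1" using y(2) by (simp add: x_def norm_scaleC norm_divide)
    moreover have "An (nk k) x = lk k *\<^sub>C x"
      unfolding x_def Asc[OF y(1)] y(3) by (simp add: scaleC_scaleC mult.commute)
    ultimately show ?thesis by blast
  qed
  then obtain x where x: "\<forall>k. x k \<in> L (nk k) \<and> norm (x k) = 1 \<and> An (nk k) (x k) = lk k *\<^sub>C x k"
    using choice[of "\<lambda>k x. x \<in> L (nk k) \<and> norm x = 1 \<and> An (nk k) x = lk k *\<^sub>C x"] by blast
  have "\<exists>r w. strict_mono r \<and> weakly_to (x \<circ> r) w"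
    by (rule weak_compact[OF sep, of x 1]) (use x in simp)
  then obtain r w where r: "strict_mono r" "weakly_to (x \<circ> r) w" by blast
  have nkr: "filterlim (\<lambda>k. nk (r k)) at_top sequentially"
    by (rule filterlim_compose[OF nk filterlim_subseq[OF r(1)]])
  have lkr: "(\<lambda>k. lk (r k)) \<longlonglongrightarrow> complex_of_real t"
    using LIMSEQ_subseq_LIMSEQ[OF lkt r(1)] by (simp add: o_def)
  have xr: "\<forall>k. (x \<circ> r) k \<in> L (nk (r k)) \<and> norm ((x \<circ> r) k) = 1 \<and>
      An (nk (r k)) ((x \<circ> r) k) = lk (r k) *\<^sub>C (x \<circ> r) k" using x by simp
  have w0: "w \<noteq> 0"
  proof
    assume w: "w = 0"
    have "(\<lambda>k. An (nk (r k)) ((x \<circ> r) k) - complex_of_real t *\<^sub>C (x \<circ> r) k) \<longlonglongrightarrow> 0"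
    proof (rule Lim_null_comparison)
      show "\<forall>\<^sub>F k in sequentially. norm (An (nk (r k)) ((x \<circ> r) k) - complex_of_real t *\<^sub>C (x \<circ> r) k)
          \<le> cmod (lk (r k) - complex_of_real t)"
        using xr by (simp add: scaleC_add_left[symmetric] cvs.scale_left_diff_distrib[symmetric] norm_scaleC)
      show "(\<lambda>k. cmod (lk (r k) - complex_of_real t)) \<longlonglongrightarrow> 0"
        using lkr by (simp add: tendsto_norm_zero_iff LIM_zero_iff)
    qed
    hence "t \<in> lim_ess_spectrum L An"
      unfolding lim_ess_spectrum_def using nkr xr r(2) w
      by (intro CollectI exI[of _ "\<lambda>k. nk (r k)"] exI[of _ "x \<circ> r"]) auto
    thus False using tne by simp
  qed
  have wD: "w \<in> D \<and> A w = complex_of_real t *\<^sub>C w" by (rule eiglim[OF nkr xr lkr r(2)])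
  have ts: "complex_of_real t \<in> op_spectrum D A"
  proof -
    have "\<not> inj_on (\<lambda>x. A x - complex_of_real t *\<^sub>C x) D"
    proof
      assume inj: "inj_on (\<lambda>x. A x - complex_of_real t *\<^sub>C x) D"
      have eq: "A w - complex_of_real t *\<^sub>C w = A 0 - complex_of_real t *\<^sub>C 0"
        using wD A0[OF sa] by simp
      have "w = 0" by (rule inj_onD[OF inj eq conjunct1[OF wD] D0[OF sa]])
      thus False using w0 by simp
    qed
    thus ?thesis unfolding op_spectrum_def bij_betw_def by blast
  qed
  have ne: "{x \<in> D. A x = complex_of_real t *\<^sub>C x} \<noteq> {0}" using wD w0 by blast
  have rest: "(\<exists>e>0. ball (complex_of_real t) e \<inter> op_spectrum D A = {complex_of_real t}) \<and>
      cfinite_dim {x \<in> D. A x = complex_of_real t *\<^sub>C x}"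
  proof (rule ccontr)
    assume "\<not> ?thesis"
    hence "weyl D A t" using weyl_main[OF sa sep ts] by blast
    hence "t \<in> lim_ess_spectrum L An" by (rule weyl_lim_ess)
    thus False using tne by simp
  qed
  show "z \<in> disc_spectrum D A" unfolding disc_spectrum_def zt using ts ne rest by blast
qed

end

lemma eventually_exists_seq: "eventually P sequentially \<Longrightarrow> \<exists>k. P k"
  unfolding eventually_sequentially by auto

lemma closed_lim_spectrum: "closed (lim_spectrum L An)"
  unfolding closed_sequential_limits
proof (intro allI impI)
  fix s and l :: real assume a: "(\<forall>j. s j \<in> lim_spectrum L An) \<and> s \<longlonglongrightarrow> l"
  define Q where "Q j p \<longleftrightarrow> fst p \<ge> j \<and> snd p \<in> fin_spectrum (L (fst p)) (An (fst p)) \<and>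
      cmod (snd p - complex_of_real (s j)) < inverse (real (Suc j))" for j p
  have "\<exists>p. Q j p" for j
  proof -
    obtain nk lk where nk: "filterlim nk at_top sequentially"
      and lk: "\<And>k. lk k \<in> fin_spectrum (L (nk k)) (An (nk k))" and lkt: "lk \<longlonglongrightarrow> complex_of_real (s j)"
      using a unfolding lim_spectrum_def by blast
    have e1: "eventually (\<lambda>k. j \<le> nk k) sequentially" using nk unfolding filterlim_at_top by blast
    have e2: "eventually (\<lambda>k. dist (lk k) (complex_of_real (s j)) < inverse (real (Suc j))) sequentially"
      by (rule tendstoD[OF lkt]) simp
    obtain k where "j \<le> nk k" "dist (lk k) (complex_of_real (s j)) < inverse (real (Suc j))"
      using eventually_exists_seq[OF eventually_conj[OF e1 e2]] by blast
    hence "Q j (nk k, lk k)" using lk[of k] unfolding Q_def by (simp add: dist_norm)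
    thus ?thesis by blast
  qed
  then obtain p where p: "\<forall>j. Q j (p j)" using choice[of Q] by blast
  define n where "n j = fst (p j)" for j
  define lk where "lk j = snd (p j)" for j
  have P: "n j \<ge> j" "lk j \<in> fin_spectrum (L (n j)) (An (n j))"
      "cmod (lk j - complex_of_real (s j)) < inverse (real (Suc j))" for j
    using p unfolding Q_def n_def lk_def by auto
  have "(\<lambda>j. lk j - complex_of_real l) \<longlonglongrightarrow> 0"
  proof (rule Lim_null_comparison)
    show "\<forall>\<^sub>F j in sequentially. norm (lk j - complex_of_real l) \<le> inverse (real (Suc j)) + \<bar>s j - l\<bar>"
    proof (intro always_eventually allI)
      fix j
      have "norm (lk j - complex_of_real l) \<le> cmod (lk j - complex_of_real (s j)) + cmod (complex_of_real (s j) - complex_of_real l)"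
        using norm_triangle_ineq[of "lk j - complex_of_real (s j)" "complex_of_real (s j) - complex_of_real l"] by simp
      also have "cmod (complex_of_real (s j) - complex_of_real l) = \<bar>s j - l\<bar>"
        by (simp only: of_real_diff[symmetric] norm_of_real)
      finally show "norm (lk j - complex_of_real l) \<le> inverse (real (Suc j)) + \<bar>s j - l\<bar>" using P(3)[of j] by simp
    qed
    have "(\<lambda>j. \<bar>s j - l\<bar>) \<longlonglongrightarrow> \<bar>l - l\<bar>" using a by (intro tendsto_intros) auto
    hence "(\<lambda>j. inverse (real (Suc j)) + \<bar>s j - l\<bar>) \<longlonglongrightarrow> 0 + \<bar>l - l\<bar>"
      by (intro tendsto_add LIMSEQ_inverse_real_of_nat)
    thus "(\<lambda>j. inverse (real (Suc j)) + \<bar>s j - l\<bar>) \<longlonglongrightarrow> 0" by simp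
  qed
  hence "lk \<longlonglongrightarrow> complex_of_real l" by (simp add: LIM_zero_iff)
  moreover have "filterlim n at_top sequentially" by (rule ge_filterlim[OF P(1)])
  ultimately show "l \<in> lim_spectrum L An" unfolding lim_spectrum_def using P(2) by blast
qed

lemma closed_lim_ess_spectrum:
  fixes L :: "nat \<Rightarrow> 'a::complex_inner set"
  assumes sep: "separable_space TYPE('a)"
  shows "closed (lim_ess_spectrum L An)"
  unfolding closed_sequential_limits
proof (intro allI impI)
  fix s and l :: real assume a: "(\<forall>j. s j \<in> lim_ess_spectrum L An) \<and> s \<longlonglongrightarrow> l"
  obtain C :: "'a set" where C: "countable C" "closure C = UNIV"
    using sep unfolding separable_space_def by blast
  have Cne: "C \<noteq> {}" using C(2) by auto
  define c where "c = from_nat_into C"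
  have rc: "range c = C" using Cne C(1) by (simp add: c_def)
  define Q where "Q j p \<longleftrightarrow> fst p \<ge> j \<and> snd p \<in> L (fst p) \<and> norm (snd p) = 1 \<and>
      (\<forall>i\<in>{..j}. cmod (cinner (c i) (snd p)) < inverse (real (Suc j))) \<and>
      norm (An (fst p) (snd p) - complex_of_real (s j) *\<^sub>C snd p) < inverse (real (Suc j))" for j p
  have "\<exists>p. Q j p" for j
  proof -
    obtain nk x where nk: "filterlim nk at_top sequentially"
      and x: "\<forall>k. x k \<in> L (nk k) \<and> norm (x k) = 1" and wx: "weakly_to x 0"
      and r: "(\<lambda>k. An (nk k) (x k) - complex_of_real (s j) *\<^sub>C x k) \<longlonglongrightarrow> 0"
      using a unfolding lim_ess_spectrum_def by blast
    have pos: "inverse (real (Suc j)) > 0" by simp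
    have e1: "eventually (\<lambda>k. j \<le> nk k) sequentially" using nk unfolding filterlim_at_top by blast
    have e2: "eventually (\<lambda>k. \<forall>i\<in>{..j}. cmod (cinner (c i) (x k)) < inverse (real (Suc j))) sequentially"
    proof (rule eventually_ball_finite)
      show "\<forall>i\<in>{..j}. eventually (\<lambda>k. cmod (cinner (c i) (x k)) < inverse (real (Suc j))) sequentially"
      proof
        fix i
        have "(\<lambda>k. cinner (c i) (x k)) \<longlonglongrightarrow> cinner (c i) 0" using wx unfolding weakly_to_def by blast
        from tendstoD[OF this pos]
        show "eventually (\<lambda>k. cmod (cinner (c i) (x k)) < inverse (real (Suc j))) sequentially"
          by (simp add: dist_norm)
      qed
    qed simp
    have e3: "eventually (\<lambda>k. norm (An (nk k) (x k) - complex_of_real (s j) *\<^sub>C x k) < inverse (real (Suc j))) sequentially"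
      using tendstoD[OF r pos] by (simp add: dist_norm)
    obtain k where "j \<le> nk k" "\<forall>i\<in>{..j}. cmod (cinner (c i) (x k)) < inverse (real (Suc j))"
      "norm (An (nk k) (x k) - complex_of_real (s j) *\<^sub>C x k) < inverse (real (Suc j))"
      using eventually_exists_seq[OF eventually_conj[OF e1 eventually_conj[OF e2 e3]]] by blast
    hence "Q j (nk k, x k)" using x unfolding Q_def by simp
    thus ?thesis by blast
  qed
  then obtain p where p: "\<forall>j. Q j (p j)" using choice[of Q] by blast
  define n where "n j = fst (p j)" for j
  define y where "y j = snd (p j)" for j
  have P: "n j \<ge> j" "y j \<in> L (n j)" "norm (y j) = 1"
      "\<forall>i\<in>{..j}. cmod (cinner (c i) (y j)) < inverse (real (Suc j))"
      "norm (An (n j) (y j) - complex_of_real (s j) *\<^sub>C y j) < inverse (real (Suc j))" for j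
    using p unfolding Q_def n_def y_def by auto
  have res: "(\<lambda>j. An (n j) (y j) - complex_of_real l *\<^sub>C y j) \<longlonglongrightarrow> 0"
  proof (rule Lim_null_comparison)
    show "\<forall>\<^sub>F j in sequentially. norm (An (n j) (y j) - complex_of_real l *\<^sub>C y j) \<le> inverse (real (Suc j)) + \<bar>s j - l\<bar>"
    proof (intro always_eventually allI)
      fix j
      have eq: "An (n j) (y j) - complex_of_real l *\<^sub>C y j =
          (An (n j) (y j) - complex_of_real (s j) *\<^sub>C y j) + complex_of_real (s j - l) *\<^sub>C y j"
        by (simp add: scaleC_add_left[symmetric] algebra_simps)
      have "norm (An (n j) (y j) - complex_of_real l *\<^sub>C y j) \<le>
          norm (An (n j) (y j) - complex_of_real (s j) *\<^sub>C y j) + \<bar>s j - l\<bar>"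
        unfolding eq using norm_triangle_ineq[of "An (n j) (y j) - complex_of_real (s j) *\<^sub>C y j"
            "complex_of_real (s j - l) *\<^sub>C y j"] P(3)[of j]
        by (simp only: norm_scaleC norm_of_real mult_1_right)
      thus "norm (An (n j) (y j) - complex_of_real l *\<^sub>C y j) \<le> inverse (real (Suc j)) + \<bar>s j - l\<bar>"
        using P(5)[of j] by simp
    qed
    have "(\<lambda>j. \<bar>s j - l\<bar>) \<longlonglongrightarrow> \<bar>l - l\<bar>" using a by (intro tendsto_intros) auto
    hence "(\<lambda>j. inverse (real (Suc j)) + \<bar>s j - l\<bar>) \<longlonglongrightarrow> 0 + \<bar>l - l\<bar>"
      by (intro tendsto_add LIMSEQ_inverse_real_of_nat)
    thus "(\<lambda>j. inverse (real (Suc j)) + \<bar>s j - l\<bar>) \<longlonglongrightarrow> 0" by simp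
  qed
  have wy: "weakly_to y 0"
    unfolding weakly_to_def
  proof
    fix w
    show "(\<lambda>j. cinner w (y j)) \<longlonglongrightarrow> cinner w 0"
    proof (rule LIMSEQ_I)
      fix \<epsilon> :: real assume e: "\<epsilon> > 0"
      have "w \<in> closure C" using C(2) by simp
      moreover have "\<epsilon> / 2 > 0" using e by simp
      ultimately obtain c' where c': "c' \<in> C" "dist c' w < \<epsilon> / 2" unfolding closure_approachable by blast
      obtain i where ci: "c i = c'" using rc c'(1) by blast
      obtain N where N: "inverse (real (Suc N)) < \<epsilon> / 2" using reals_Archimedean[OF \<open>\<epsilon>/2 > 0\<close>] by auto
      show "\<exists>no. \<forall>j\<ge>no. norm (cinner w (y j) - cinner w 0) < \<epsilon>"
      proof (intro exI allI impI)
        fix j assume j: "j \<ge> max i N"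
        have "cmod (cinner (c i) (y j)) < inverse (real (Suc j))" using P(4)[of j] j by simp
        also have "\<dots> \<le> inverse (real (Suc N))" using j by (simp add: le_imp_inverse_le)
        finally have a1: "cmod (cinner (c i) (y j)) < \<epsilon> / 2" using N by simp
        have a2: "cmod (cinner (w - c i) (y j)) \<le> norm (w - c i)"
          using Cauchy_Schwarz[of "w - c i" "y j"] P(3)[of j] by simp
        have a3: "norm (w - c i) < \<epsilon> / 2" using c'(2) ci by (simp add: dist_norm norm_minus_commute)
        have "cinner w (y j) = cinner (w - c i) (y j) + cinner (c i) (y j)" by (simp add: cinner_diff_left)
        hence "norm (cinner w (y j)) \<le> cmod (cinner (w - c i) (y j)) + cmod (cinner (c i) (y j))"
          using norm_triangle_ineq by metis
        thus "norm (cinner w (y j) - cinner w 0) < \<epsilon>" using a1 a2 a3 by simp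
      qed
    qed
  qed
  have "filterlim n at_top sequentially" by (rule ge_filterlim[OF P(1)])
  thus "l \<in> lim_ess_spectrum L An" unfolding lim_ess_spectrum_def using P(2,3) wy res by blast
qed

lemma cproj_diff:
  assumes "cfinite_dim V" shows "cproj V (u - v) = cproj V u - cproj V v"
proof -
  have "cproj V u = cproj V ((u - v) + v)" by simp
  also have "\<dots> = cproj V (u - v) + cproj V v" by (rule cproj_props(5)[OF assms])
  finally show ?thesis by simp
qed

lemma cinner_strong_weak:
  fixes x :: "nat \<Rightarrow> 'a::complex_inner"
  assumes a: "a \<longlonglongrightarrow> b" and w: "weakly_to x w" and n: "\<And>k. norm (x k) = 1"
  shows "(\<lambda>k. cinner (a k) (x k)) \<longlonglongrightarrow> cinner b w"
proof -
  have e: "cinner (a k) (x k) = cinner (a k - b) (x k) + cinner b (x k)" for k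
    by (simp add: cinner_diff_left)
  have "(\<lambda>k. cinner (a k - b) (x k)) \<longlonglongrightarrow> 0"
  proof (rule Lim_null_comparison)
    show "\<forall>\<^sub>F k in sequentially. norm (cinner (a k - b) (x k)) \<le> norm (a k - b)"
      using Cauchy_Schwarz[of "a k - b" "x k" for k] n by simp
    show "(\<lambda>k. norm (a k - b)) \<longlonglongrightarrow> 0" using a by (simp add: tendsto_norm_zero_iff LIM_zero_iff)
  qed
  moreover have "(\<lambda>k. cinner b (x k)) \<longlonglongrightarrow> cinner b w" using w unfolding weakly_to_def by blast
  ultimately have "(\<lambda>k. cinner (a k - b) (x k) + cinner b (x k)) \<longlonglongrightarrow> 0 + cinner b w"
    by (rule tendsto_add)
  thus ?thesis unfolding e by simp
qed

lemma reg_limits: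
  fixes g :: "nat \<Rightarrow> 'a::real_normed_vector"
  assumes "(\<lambda>n. norm (g n - f) + norm (T (g n) - T f)) \<longlonglongrightarrow> 0"
  shows "g \<longlonglongrightarrow> f" "(\<lambda>n. T (g n)) \<longlonglongrightarrow> T f"
proof -
  have "(\<lambda>n. g n - f) \<longlonglongrightarrow> 0"
    by (rule Lim_null_comparison[OF _ assms]) (simp add: always_eventually)
  thus "g \<longlonglongrightarrow> f" by (simp add: LIM_zero_iff)
  have "(\<lambda>n. T (g n) - T f) \<longlonglongrightarrow> 0"
    by (rule Lim_null_comparison[OF _ assms]) (simp add: always_eventually)
  thus "(\<lambda>n. T (g n)) \<longlonglongrightarrow> T f" by (simp add: LIM_zero_iff)
qed

lemma regular_choose:
  assumes "(\<lambda>n. d n) \<longlonglongrightarrow> (0::real)" "e > 0"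
  shows "\<exists>n\<ge>N. d n < e"
proof -
  have "eventually (\<lambda>n. dist (d n) 0 < e) sequentially" by (rule tendstoD[OF assms])
  moreover have "eventually (\<lambda>n. N \<le> n) sequentially" by (rule eventually_ge_at_top)
  ultimately have "eventually (\<lambda>n. N \<le> n \<and> d n < e) sequentially"
    by eventually_elim (auto simp: dist_real_def)
  thus ?thesis using eventually_exists_seq by blast
qed

lemma gframe_A:
  fixes D :: "'a::{complex_inner, complete_space} set"
  assumes sa: "selfadjoint D A" and sep: "separable_space TYPE('a)" and reg: "op_regular D A L"
  shows "gframe D A L (galerkin_op A L)"
proof -
  have fd: "cfinite_dim (L n)" and LD: "L n \<subseteq> D" for n
    using reg unfolding op_regular_def galerkin_seq_def by auto
  have approx: "\<exists>g. (\<forall>n. g n \<in> L n) \<and> (\<lambda>n. norm (g n - f) + norm (A (g n) - A f)) \<longlonglongrightarrow> 0" if "f \<in> D" for f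
    using reg that unfolding op_regular_def by blast
  show ?thesis
  proof
    show "selfadjoint D A" by (rule sa)
    show "separable_space TYPE('a)" by (rule sep)
    show "cfinite_dim (L n)" for n by (rule fd)
    show "galerkin_op A L n x \<in> L n" if "x \<in> L n" for n x
      unfolding galerkin_op_def by (rule cproj_props(1)[OF fd])
    show "galerkin_op A L n (x + y) = galerkin_op A L n x + galerkin_op A L n y"
      if "x \<in> L n" "y \<in> L n" for n x y
    proof -
      have "x \<in> D" "y \<in> D" using that LD by auto
      thus ?thesis unfolding galerkin_op_def by (simp add: sa_add[OF sa] cproj_props(5)[OF fd])
    qed
    show "galerkin_op A L n (c *\<^sub>C x) = c *\<^sub>C galerkin_op A L n x" if "x \<in> L n" for n c x
    proof -
      have "x \<in> D" using that LD by auto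
      thus ?thesis unfolding galerkin_op_def by (simp add: sa_sc[OF sa] cproj_props(6)[OF fd])
    qed
  next
    fix u t and e :: real and N :: nat assume u: "u \<in> D" and e: "e > 0"
    obtain g where g: "\<And>n. g n \<in> L n" "(\<lambda>n. norm (g n - u) + norm (A (g n) - A u)) \<longlonglongrightarrow> 0"
      using approx[OF u] by blast
    have "e / (1 + \<bar>t\<bar>) > 0" using e by (simp add: add_pos_nonneg)
    from regular_choose[OF g(2) this, of N]
    obtain n where n: "n \<ge> N" "norm (g n - u) + norm (A (g n) - A u) < e / (1 + \<bar>t\<bar>)" by blast
    define x where "x = g n"
    define d where "d = norm (g n - u) + norm (A (g n) - A u)"
    have d0: "d \<ge> 0" by (simp add: d_def)
    have de: "(1 + \<bar>t\<bar>) * d \<le> e" using n(2) unfolding d_def[symmetric]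
      by (simp add: field_simps)
    have xL: "x \<in> L n" by (simp add: x_def g)
    have txL: "complex_of_real t *\<^sub>C x \<in> L n" using xL cfinite_dim_subspace[OF fd] cvs.subspace_scale by blast
    have "galerkin_op A L n x - complex_of_real t *\<^sub>C x = cproj (L n) (A x - complex_of_real t *\<^sub>C x)"
      unfolding galerkin_op_def cproj_diff[OF fd] cproj_props(4)[OF fd txL] ..
    hence "norm (galerkin_op A L n x - complex_of_real t *\<^sub>C x) \<le> norm (A x - complex_of_real t *\<^sub>C x)"
      using cproj_props(3)[OF fd] by simp
    also have "A x - complex_of_real t *\<^sub>C x = (A u - complex_of_real t *\<^sub>C u) + (A x - A u) - complex_of_real t *\<^sub>C (x - u)"
      by (simp add: cvs.scale_right_diff_distrib)
    also have "norm \<dots> \<le> norm (A u - complex_of_real t *\<^sub>C u) + norm (A x - A u) + \<bar>t\<bar> * norm (x - u)"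
      by (rule order_trans[OF norm_triangle_ineq4], rule add_mono[OF norm_triangle_ineq])
         (simp_all add: norm_scaleC)
    also have "\<dots> \<le> norm (A u - complex_of_real t *\<^sub>C u) + (1 + \<bar>t\<bar>) * d"
    proof -
      have "norm (A x - A u) \<le> d" "norm (x - u) \<le> d" by (simp_all add: d_def x_def)
      hence "norm (A x - A u) + \<bar>t\<bar> * norm (x - u) \<le> d + \<bar>t\<bar> * d"
        by (simp add: add_mono mult_left_mono)
      thus ?thesis by (simp add: algebra_simps)
    qed
    finally have r: "norm (galerkin_op A L n x - complex_of_real t *\<^sub>C x) \<le> norm (A u - complex_of_real t *\<^sub>C u) + e"
      using de by linarith
    have "norm (x - u) \<le> d" by (simp add: d_def x_def)
    also have "d \<le> (1 + \<bar>t\<bar>) * d"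
    proof -
      have "0 \<le> \<bar>t\<bar> * d" using d0 by simp
      thus ?thesis by (simp add: algebra_simps)
    qed
    finally have "norm (x - u) \<le> e" using de by linarith
    thus "\<exists>n\<ge>N. \<exists>x\<in>L n. norm (x - u) \<le> e \<and>
        norm (galerkin_op A L n x - complex_of_real t *\<^sub>C x) \<le> norm (A u - complex_of_real t *\<^sub>C u) + e"
      using n(1) xL r by blast
  next
    fix nk x lk t w
    assume nk: "filterlim nk at_top sequentially"
      and x: "\<forall>k. x k \<in> L (nk k) \<and> norm (x k) = 1 \<and> galerkin_op A L (nk k) (x k) = lk k *\<^sub>C x k"
      and lk: "lk \<longlonglongrightarrow> complex_of_real t" and w: "weakly_to x w"
    show "w \<in> D \<and> A w = complex_of_real t *\<^sub>C w"
    proof (rule eig_from_form[OF sa])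
      fix f assume f: "f \<in> D"
      obtain g where g: "\<And>n. g n \<in> L n" "(\<lambda>n. norm (g n - f) + norm (A (g n) - A f)) \<longlonglongrightarrow> 0"
        using approx[OF f] by blast
      have g1: "(\<lambda>k. g (nk k)) \<longlonglongrightarrow> f" using filterlim_compose[OF reg_limits(1)[OF g(2)] nk] .
      have g2: "(\<lambda>k. A (g (nk k))) \<longlonglongrightarrow> A f" using filterlim_compose[OF reg_limits(2)[OF g(2)] nk] .
      have xn: "\<And>k. norm (x k) = 1" using x by blast
      have eq: "cinner (A (g (nk k))) (x k) = lk k * cinner (g (nk k)) (x k)" for k
      proof -
        have xk: "x k \<in> L (nk k)" using x by blast
        have "cinner (A (g (nk k))) (x k) = cinner (g (nk k)) (A (x k))"
          using sa_sym[OF sa] g(1) xk LD by blast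
        also have "\<dots> = cinner (g (nk k)) (cproj (L (nk k)) (A (x k)))"
          using cproj_props(2)[OF fd g(1), of "nk k" "A (x k)"] by (simp add: cinner_diff_right)
        also have "\<dots> = lk k * cinner (g (nk k)) (x k)"
          using x unfolding galerkin_op_def by (simp add: cinner_scaleC_right)
        finally show ?thesis .
      qed
      have "(\<lambda>k. cinner (A (g (nk k))) (x k)) \<longlonglongrightarrow> cinner (A f) w" by (rule cinner_strong_weak[OF g2 w xn])
      moreover have "(\<lambda>k. lk k * cinner (g (nk k)) (x k)) \<longlonglongrightarrow> complex_of_real t * cinner f w"
        by (rule tendsto_mult[OF lk cinner_strong_weak[OF g1 w xn]])
      ultimately show "cinner (A f) w = complex_of_real t * cinner f w" unfolding eq by (rule LIMSEQ_unique)
    qed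
  qed
qed

lemma S_sum:
  fixes DS :: "'a::{complex_inner, complete_space} set"
  assumes sa: "selfadjoint DS S" and fin: "finite E" and sub: "E \<subseteq> DS"
  shows "(\<Sum>e\<in>E. c e *\<^sub>C e) \<in> DS \<and> S (\<Sum>e\<in>E. c e *\<^sub>C e) = (\<Sum>e\<in>E. c e *\<^sub>C S e)"
  using fin sub
proof (induction E rule: finite_induct)
  case empty thus ?case using D0[OF sa] A0[OF sa] by simp
next
  case (insert a F)
  have aD: "a \<in> DS" and FD: "F \<subseteq> DS" using insert.prems by auto
  have IH: "(\<Sum>e\<in>F. c e *\<^sub>C e) \<in> DS" "S (\<Sum>e\<in>F. c e *\<^sub>C e) = (\<Sum>e\<in>F. c e *\<^sub>C S e)"
    using insert.IH[OF FD] by auto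
  have caD: "c a *\<^sub>C a \<in> DS" by (rule Dsc[OF sa aD])
  have "(\<Sum>e\<in>insert a F. c e *\<^sub>C e) = c a *\<^sub>C a + (\<Sum>e\<in>F. c e *\<^sub>C e)" using insert.hyps by simp
  moreover have "(\<Sum>e\<in>insert a F. c e *\<^sub>C S e) = c a *\<^sub>C S a + (\<Sum>e\<in>F. c e *\<^sub>C S e)" using insert.hyps by simp
  ultimately show ?case using Dadd[OF sa caD IH(1)] sa_add[OF sa caD IH(1)] sa_sc[OF sa aD] IH(2) by simp
qed

lemma gframe_S:
  fixes D :: "'a::{complex_inner, complete_space} set"
  assumes sa: "selfadjoint D A" and sep: "separable_space TYPE('a)"
    and sq: "is_op_sqrt D A DS S" and reg: "op_regular DS S L"
  shows "gframe D A L (galerkin_form_op S L)"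
proof -
  have saS: "selfadjoint DS S" and Ddef: "D = {x \<in> DS. S x \<in> DS}" and SSA: "\<And>x. x \<in> D \<Longrightarrow> S (S x) = A x"
    using sq unfolding is_op_sqrt_def by auto
  have fd: "cfinite_dim (L n)" and LDS: "L n \<subseteq> DS" for n
    using reg unfolding op_regular_def galerkin_seq_def by auto
  have approx: "\<exists>g. (\<forall>n. g n \<in> L n) \<and> (\<lambda>n. norm (g n - f) + norm (S (g n) - S f)) \<longlonglongrightarrow> 0" if "f \<in> DS" for f
    using reg that unfolding op_regular_def by blast
  have subL: "cvs.subspace (L n)" for n by (rule cfinite_dim_subspace[OF fd])
  have inDS: "x \<in> DS" if "x \<in> L n" for x n using that LDS by blast
  have Ldiff: "a - b \<in> L n" if "a \<in> L n" "b \<in> L n" for a b n by (rule cvs.subspace_diff[OF subL that])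
  have Ladd: "a + b \<in> L n" if "a \<in> L n" "b \<in> L n" for a b n by (rule cvs.subspace_add[OF subL that])
  have Lsc: "c *\<^sub>C a \<in> L n" if "a \<in> L n" for a c n by (rule cvs.subspace_scale[OF subL that])
  let ?An = "galerkin_form_op S L"
  have form_exists: "\<exists>w. w \<in> L n \<and> (\<forall>y\<in>L n. cinner y w = cinner (S y) (S x))" if x: "x \<in> L n" for n x
  proof -
    obtain E where E: "finite E" "orthonormal E" "cvs.span E = L n" using cfinite_dim_onb[OF fd] .
    have EL: "E \<subseteq> L n" using E(3) cvs.span_superset by blast
    have ED: "E \<subseteq> DS" using EL LDS by blast
    define w where "w = (\<Sum>e\<in>E. cinner (S e) (S x) *\<^sub>C e)"
    have wL: "w \<in> L n" unfolding w_def E(3)[symmetric]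
      by (intro cvs.span_sum cvs.span_scale cvs.span_base)
    have "cinner y w = cinner (S y) (S x)" if y: "y \<in> L n" for y
    proof -
      have ye: "y = (\<Sum>e\<in>E. cinner e y *\<^sub>C e)"
        using fproj_id[OF E(1,2), of y] y E(3) unfolding fproj_def by simp
      have Sy: "S y = (\<Sum>e\<in>E. cinner e y *\<^sub>C S e)"
        using S_sum[OF saS E(1) ED, of "\<lambda>e. cinner e y"] ye by simp
      have "cinner (S y) (S x) = (\<Sum>e\<in>E. cnj (cinner e y) * cinner (S e) (S x))"
        unfolding Sy by (simp add: cinner_sum_left cinner_scaleC_left)
      also have "\<dots> = (\<Sum>e\<in>E. cinner (S e) (S x) * cinner y e)"
        by (intro sum.cong refl) (simp add: cinner_commute[of y] mult.commute)
      also have "\<dots> = cinner y w" unfolding w_def by (simp add: cinner_sum_right cinner_scaleC_right)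
      finally show ?thesis by simp
    qed
    thus ?thesis using wL by blast
  qed
  have form_eq: "?An n x = w" if "w \<in> L n" "\<forall>y\<in>L n. cinner y w = cinner (S y) (S x)" for n x w
    unfolding galerkin_form_op_def
  proof (rule the_equality)
    show "w \<in> L n \<and> (\<forall>y\<in>L n. cinner y w = cinner (S y) (S x))" using that by blast
  next
    fix w' assume w': "w' \<in> L n \<and> (\<forall>y\<in>L n. cinner y w' = cinner (S y) (S x))"
    have d: "w' - w \<in> L n" using w' that(1) Ldiff by blast
    have "cinner (w' - w) (w' - w) = cinner (w' - w) w' - cinner (w' - w) w" by (simp add: cinner_diff_right)
    also have "\<dots> = 0" using w' that(2) d by simp
    finally show "w' = w" by simp
  qed
  have form_char: "?An n x \<in> L n \<and> (\<forall>y\<in>L n. cinner y (?An n x) = cinner (S y) (S x))" if xL0: "x \<in> L n" for n x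
  proof -
    obtain w where w: "w \<in> L n" "\<forall>y\<in>L n. cinner y w = cinner (S y) (S x)" using form_exists[OF xL0] by blast
    show ?thesis using form_eq[OF w] w by simp
  qed
  have Amap: "?An n x \<in> L n" if "x \<in> L n" for n x using form_char[OF that] by blast
  have Aform: "cinner y (?An n x) = cinner (S y) (S x)" if "x \<in> L n" "y \<in> L n" for n x y
    using form_char[OF that(1)] that(2) by blast
  have Aadd: "?An n (x + y) = ?An n x + ?An n y" if "x \<in> L n" "y \<in> L n" for n x y
  proof (rule form_eq)
    show "?An n x + ?An n y \<in> L n" using Amap[OF that(1)] Amap[OF that(2)] Ladd by blast
    show "\<forall>z\<in>L n. cinner z (?An n x + ?An n y) = cinner (S z) (S (x + y))"
      using that Aform sa_add[OF saS inDS[OF that(1)] inDS[OF that(2)]]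
      by (simp add: cinner_add_right)
  qed
  have Asc: "?An n (c *\<^sub>C x) = c *\<^sub>C ?An n x" if "x \<in> L n" for n c x
  proof (rule form_eq)
    show "c *\<^sub>C ?An n x \<in> L n" using Amap[OF that] Lsc by blast
    show "\<forall>z\<in>L n. cinner z (c *\<^sub>C ?An n x) = cinner (S z) (S (c *\<^sub>C x))"
      using that Aform sa_sc[OF saS inDS[OF that]] by (simp add: cinner_scaleC_right)
  qed
  show ?thesis
  proof
    show "selfadjoint D A" by (rule sa)
    show "separable_space TYPE('a)" by (rule sep)
    show "cfinite_dim (L n)" for n by (rule fd)
    show "?An n x \<in> L n" if "x \<in> L n" for n x by (rule Amap[OF that])
    show "?An n (x + y) = ?An n x + ?An n y" if "x \<in> L n" "y \<in> L n" for n x y by (rule Aadd[OF that])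
    show "?An n (c *\<^sub>C x) = c *\<^sub>C ?An n x" if "x \<in> L n" for n c x by (rule Asc[OF that])
  next
    fix u and t :: real and e :: real and N :: nat assume u: "u \<in> D" and e: "e > 0"
    have uDS: "u \<in> DS" and SuDS: "S u \<in> DS" using u Ddef by auto
    obtain g where g: "\<And>n. g n \<in> L n" "(\<lambda>n. norm (g n - u) + norm (S (g n) - S u)) \<longlonglongrightarrow> 0"
      using approx[OF uDS] by blast
    define K where "K = 1 + \<bar>1 + t\<bar>"
    have K: "K > 0" "K \<ge> 1" by (auto simp: K_def)
    have "e / K > 0" using e K by simp
    from regular_choose[OF g(2) this, of N]
    obtain n where n: "n \<ge> N" "norm (g n - u) + norm (S (g n) - S u) < e / K" by blast
    define \<delta> where "\<delta> = norm (g n - u) + norm (S (g n) - S u)"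
    have \<delta>0: "\<delta> \<ge> 0" by (simp add: \<delta>_def)
    have \<delta>K: "K * \<delta> \<le> e" using n(2) K unfolding \<delta>_def[symmetric] by (simp add: field_simps)
    define B where "B v = ?An n (cproj (L n) v) + cproj (L n) v" for v
    have PL: "cproj (L n) v \<in> L n" for v by (rule cproj_props(1)[OF fd])
    have BL: "B v = ?An n v + v" if "v \<in> L n" for v using cproj_props(4)[OF fd that] by (simp add: B_def)
    have Badd: "B (v + v') = B v + B v'" for v v'
      unfolding B_def cproj_props(5)[OF fd] Aadd[OF PL PL] by (simp add: algebra_simps)
    have Bsc: "B (c *\<^sub>C v) = c *\<^sub>C B v" for c v
      unfolding B_def cproj_props(6)[OF fd] Asc[OF PL] by (simp add: scaleC_add_right)
    have BV: "B ` L n \<subseteq> L n"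
    proof (rule image_subsetI)
      fix v assume v: "v \<in> L n"
      show "B v \<in> L n" using cvs.subspace_add[OF subL Amap[OF v] v] BL[OF v] by simp
    qed
    have Binj: "inj_on B (L n)"
    proof (rule inj_onI)
      fix a b assume ab: "a \<in> L n" "b \<in> L n" "B a = B b"
      define z where "z = a - b"
      have zL: "z \<in> L n" using ab Ldiff by (simp add: z_def)
      have "B z = B a - B b"
      proof -
        have "B a = B (z + b)" by (simp add: z_def)
        also have "\<dots> = B z + B b" by (rule Badd)
        finally show ?thesis by simp
      qed
      hence Bz: "?An n z + z = 0" using ab(3) BL[OF zL] by simp
      have "cinner z (?An n z + z) = 0" using Bz by simp
      hence "cinner z (?An n z) + cinner z z = 0" by (simp add: cinner_add_right)
      hence "cinner (S z) (S z) + cinner z z = 0" using Aform[OF zL zL] by simp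
      hence "Re (cinner (S z) (S z) + cinner z z) = 0" by simp
      hence "Re (cinner (S z) (S z)) + Re (cinner z z) = 0" by simp
      hence "(norm (S z))^2 + (norm z)^2 = 0" by (simp only: cinner_self_Re)
      hence "(norm z)^2 = 0" using zero_le_power2[of "norm (S z)"] zero_le_power2[of "norm z"] by linarith
      hence "norm z = 0" by simp
      thus "a = b" by (simp add: z_def)
    qed
    have Bsurj: "B ` L n = L n" by (rule fd_inj_surj[OF fd BV Binj Badd Bsc])
    define T where "T = cproj (L n) (A u + u)"
    have "T \<in> L n" unfolding T_def by (rule PL)
    hence "T \<in> B ` L n" using Bsurj by simp
    then obtain x where xL: "x \<in> L n" and Bx: "B x = T" by (metis imageE)
    have xDS: "x \<in> DS" by (rule inDS[OF xL])
    have AnxT: "?An n x + x = T" using Bx BL[OF xL] by simp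
    have yT: "cinner y T = cinner y (A u + u)" if "y \<in> L n" for y
      using cproj_props(2)[OF fd that, of "A u + u"] unfolding T_def by (simp add: cinner_diff_right)
    have yAu: "cinner y (A u) = cinner (S y) (S u)" if "y \<in> L n" for y
      using sa_sym[OF saS inDS[OF that] SuDS] SSA[OF u] by simp
    have yAnx: "cinner y (?An n x) = cinner y (A u + u) - cinner y x" if "y \<in> L n" for y
    proof -
      have "cinner y (?An n x + x) = cinner y T" using AnxT by simp
      hence "cinner y (?An n x) + cinner y x = cinner y (A u + u)" using yT[OF that] by (simp add: cinner_add_right)
      thus ?thesis by (simp add: eq_diff_eq)
    qed
    have key: "cinner (S y) (S (x - u)) + cinner y (x - u) = 0" if y: "y \<in> L n" for y
    proof -
      have "cinner (S y) (S x) = cinner y (?An n x)" using Aform[OF xL y] by simp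
      also have "\<dots> = cinner (S y) (S u) + cinner y u - cinner y x"
        using yAnx[OF y] yAu[OF y] by (simp add: cinner_add_right)
      finally have "cinner (S y) (S x) - cinner (S y) (S u) + (cinner y x - cinner y u) = 0" by simp
      thus ?thesis using Adiff[OF saS xDS uDS] by (simp add: cinner_diff_right)
    qed
    define a where "a = norm (S (x - u))"
    define b where "b = norm (x - u)"
    define d1 where "d1 = norm (S (g n - u))"
    define d2 where "d2 = norm (g n - u)"
    have \<delta>d: "\<delta> = d2 + d1" using Adiff[OF saS inDS[OF g(1)] uDS] by (simp add: \<delta>_def d1_def d2_def)
    have ab: "a^2 + b^2 \<le> d1 * a + d2 * b"
    proof -
      have gL: "g n \<in> L n" by (rule g(1))
      have xg: "x - g n \<in> L n" using xL gL Ldiff by blast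
      have Ssplit: "S (x - u) = S (x - g n) + S (g n - u)"
        using Adiff[OF saS xDS uDS] Adiff[OF saS xDS inDS[OF gL]] Adiff[OF saS inDS[OF gL] uDS] by simp
      have "cinner (S (x - u)) (S (x - u)) + cinner (x - u) (x - u) =
          (cinner (S (x - g n)) (S (x - u)) + cinner (x - g n) (x - u)) +
          (cinner (S (g n - u)) (S (x - u)) + cinner (g n - u) (x - u))"
      proof -
        have c1: "cinner (S (x - u)) (S (x - u)) = cinner (S (x - g n)) (S (x - u)) + cinner (S (g n - u)) (S (x - u))"
          by (simp only: Ssplit[symmetric] cinner_add_left[symmetric])
        have xx: "x - u = (x - g n) + (g n - u)" by simp
        have c2: "cinner (x - u) (x - u) = cinner (x - g n) (x - u) + cinner (g n - u) (x - u)"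
          by (subst (1) xx) (simp only: cinner_add_left)
        show ?thesis unfolding c1 c2 by (simp add: algebra_simps)
      qed
      also have "cinner (S (x - g n)) (S (x - u)) + cinner (x - g n) (x - u) = 0" by (rule key[OF xg])
      finally have eq: "cinner (S (x - u)) (S (x - u)) + cinner (x - u) (x - u) =
          cinner (S (g n - u)) (S (x - u)) + cinner (g n - u) (x - u)" by simp
      have "a^2 + b^2 = Re (cinner (S (x - u)) (S (x - u)) + cinner (x - u) (x - u))"
        by (simp add: a_def b_def cinner_self_Re)
      also have "\<dots> \<le> cmod (cinner (S (g n - u)) (S (x - u)) + cinner (g n - u) (x - u))"
        unfolding eq by (rule complex_Re_le_cmod)
      also have "\<dots> \<le> cmod (cinner (S (g n - u)) (S (x - u))) + cmod (cinner (g n - u) (x - u))"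
        by (rule norm_triangle_ineq)
      also have "\<dots> \<le> d1 * a + d2 * b"
        using Cauchy_Schwarz[of "S (g n - u)" "S (x - u)"] Cauchy_Schwarz[of "g n - u" "x - u"]
        by (simp add: a_def b_def d1_def d2_def)
      finally show ?thesis .
    qed
    have a0: "a \<ge> 0" "b \<ge> 0" "d1 \<ge> 0" "d2 \<ge> 0" by (simp_all add: a_def b_def d1_def d2_def)
    have bd: "b \<le> \<delta>"
    proof (cases "a \<le> b")
      case True
      have "b^2 \<le> a^2 + b^2" by simp
      also have "\<dots> \<le> d1 * a + d2 * b" by (rule ab)
      also have "\<dots> \<le> d1 * b + d2 * b" using True a0 by (simp add: mult_left_mono)
      finally have "b * b \<le> (d1 + d2) * b" by (simp add: power2_eq_square algebra_simps)
      thus ?thesis using a0 \<delta>d by (cases "b = 0") (auto simp: mult_le_cancel_right)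
    next
      case False
      have "a^2 \<le> a^2 + b^2" by simp
      also have "\<dots> \<le> d1 * a + d2 * b" by (rule ab)
      also have "\<dots> \<le> d1 * a + d2 * a" using False a0 by (simp add: mult_left_mono)
      finally have "a * a \<le> (d1 + d2) * a" by (simp add: power2_eq_square algebra_simps)
      hence "a \<le> d1 + d2" using a0 False by (cases "a = 0") (auto simp: mult_le_cancel_right)
      thus ?thesis using False \<delta>d by simp
    qed
    have xu: "norm (x - u) \<le> e"
    proof -
      have "\<delta> \<le> K * \<delta>" using K \<delta>0 by (simp add: mult_le_cancel_right1)
      thus ?thesis using bd \<delta>K by (simp add: b_def)
    qed
    define w where "w = ?An n x - complex_of_real t *\<^sub>C x"
    have wL: "w \<in> L n" unfolding w_def using Ldiff[OF Amap[OF xL] Lsc[OF xL]] by simp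
    define r where "r = (A u - complex_of_real t *\<^sub>C u) + (1 + complex_of_real t) *\<^sub>C (u - x)"
    have "cinner w w = cinner w r"
    proof -
      have "cinner w w = cinner w (?An n x) - complex_of_real t * cinner w x"
        by (simp add: w_def cinner_diff_right cinner_scaleC_right)
      also have "\<dots> = cinner w (A u + u) - cinner w x - complex_of_real t * cinner w x"
        using yAnx[OF wL] by simp
      also have "\<dots> = cinner w r"
        by (simp add: r_def cinner_add_right cinner_diff_right cinner_scaleC_right algebra_simps)
      finally show ?thesis .
    qed
    moreover have "cmod (cinner w w) = (norm w)^2" by (simp only: cinner_self norm_of_real) simp
    ultimately have "(norm w)^2 \<le> norm w * norm r"
      using Cauchy_Schwarz[of w r] by simp
    hence ww: "norm w * norm w \<le> norm w * norm r" by (simp add: power2_eq_square)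
    have wr: "norm w \<le> norm r"
    proof (cases "norm w = 0")
      case True thus ?thesis by simp
    next
      case False
      hence "norm w > 0" by simp
      thus ?thesis using ww by (simp add: mult_le_cancel_left_pos)
    qed
    have cm: "cmod (1 + complex_of_real t) = \<bar>1 + t\<bar>"
    proof -
      have "1 + complex_of_real t = complex_of_real (1 + t)" by simp
      thus ?thesis by (simp only: norm_of_real)
    qed
    have nsc: "norm ((1 + complex_of_real t) *\<^sub>C (u - x)) = \<bar>1 + t\<bar> * norm (u - x)"
      by (simp only: norm_scaleC cm)
    have r1: "norm r \<le> norm (A u - complex_of_real t *\<^sub>C u) + \<bar>1 + t\<bar> * norm (u - x)"
      unfolding r_def using norm_triangle_ineq[of "A u - complex_of_real t *\<^sub>C u" "(1 + complex_of_real t) *\<^sub>C (u - x)"]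
      unfolding nsc .
    have "norm (u - x) \<le> \<delta>" using bd norm_minus_commute[of u x] unfolding b_def by simp
    hence r2: "\<bar>1 + t\<bar> * norm (u - x) \<le> \<bar>1 + t\<bar> * \<delta>" by (rule mult_left_mono) simp
    have r3: "\<bar>1 + t\<bar> * \<delta> \<le> e" using \<delta>K \<delta>0 by (simp add: K_def algebra_simps)
    have "norm w \<le> norm (A u - complex_of_real t *\<^sub>C u) + e" using wr r1 r2 r3 by linarith
    thus "\<exists>n\<ge>N. \<exists>x\<in>L n. norm (x - u) \<le> e \<and>
        norm (?An n x - complex_of_real t *\<^sub>C x) \<le> norm (A u - complex_of_real t *\<^sub>C u) + e"
      using n(1) xL xu unfolding w_def by blast
  next
    fix nk x lk t w
    assume nk: "filterlim nk at_top sequentially"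
      and x: "\<forall>k. x k \<in> L (nk k) \<and> norm (x k) = 1 \<and> ?An (nk k) (x k) = lk k *\<^sub>C x k"
      and lk: "lk \<longlonglongrightarrow> complex_of_real t" and w: "weakly_to x w"
    have xn: "\<And>k. norm (x k) = 1" and xL: "\<And>k. x k \<in> L (nk k)" using x by auto
    obtain M where M: "M > 0" "\<And>k. cmod (lk k) \<le> M"
      using convergent_imp_Bseq[of lk] lk unfolding convergent_def Bseq_def by blast
    have Sx: "norm (S (x k)) \<le> 1 + M" for k
    proof -
      have "(norm (S (x k)))^2 = Re (cinner (S (x k)) (S (x k)))" by (simp add: cinner_self_Re)
      also have "cinner (S (x k)) (S (x k)) = cinner (x k) (?An (nk k) (x k))" using Aform[OF xL xL] by simp
      also have "\<dots> = lk k" using x xn by (simp add: cinner_scaleC_right cinner_self)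
      finally have "(norm (S (x k)))^2 \<le> M" using M(2)[of k] complex_Re_le_cmod[of "lk k"] by linarith
      show ?thesis
      proof (cases "norm (S (x k)) \<le> 1")
        case True thus ?thesis using M(1) by simp
      next
        case False
        hence "norm (S (x k)) \<le> norm (S (x k)) * norm (S (x k))" by (simp add: mult_le_cancel_left1)
        thus ?thesis using \<open>(norm (S (x k)))^2 \<le> M\<close> by (simp add: power2_eq_square)
      qed
    qed
    show "w \<in> D \<and> A w = complex_of_real t *\<^sub>C w"
    proof (rule eig_from_form[OF sa])
      fix f assume f: "f \<in> D"
      have fDS: "f \<in> DS" and SfDS: "S f \<in> DS" using f Ddef by auto
      obtain g where g: "\<And>n. g n \<in> L n" "(\<lambda>n. norm (g n - f) + norm (S (g n) - S f)) \<longlonglongrightarrow> 0"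
        using approx[OF fDS] by blast
      have g1: "(\<lambda>k. g (nk k)) \<longlonglongrightarrow> f" using filterlim_compose[OF reg_limits(1)[OF g(2)] nk] .
      have g2: "(\<lambda>k. S (g (nk k))) \<longlonglongrightarrow> S f" using filterlim_compose[OF reg_limits(2)[OF g(2)] nk] .
      have eq: "cinner (A f) (x k) = lk k * cinner (g (nk k)) (x k) - cinner (S (g (nk k)) - S f) (S (x k))" for k
      proof -
        have "cinner (S (g (nk k))) (S (x k)) = cinner (g (nk k)) (?An (nk k) (x k))"
          using Aform[OF xL g(1)] by simp
        also have "\<dots> = lk k * cinner (g (nk k)) (x k)" using x by (simp add: cinner_scaleC_right)
        finally have e1: "cinner (S (g (nk k))) (S (x k)) = lk k * cinner (g (nk k)) (x k)" .
        have e2: "cinner (S f) (S (x k)) = cinner (A f) (x k)"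
          using sa_sym[OF saS SfDS inDS[OF xL]] SSA[OF f] by simp
        show ?thesis using e1 e2 by (simp add: cinner_diff_left)
      qed
      have z: "(\<lambda>k. cinner (S (g (nk k)) - S f) (S (x k))) \<longlonglongrightarrow> 0"
      proof (rule Lim_null_comparison)
        show "\<forall>\<^sub>F k in sequentially. norm (cinner (S (g (nk k)) - S f) (S (x k))) \<le> norm (S (g (nk k)) - S f) * (1 + M)"
        proof (intro always_eventually allI)
          fix k
          show "norm (cinner (S (g (nk k)) - S f) (S (x k))) \<le> norm (S (g (nk k)) - S f) * (1 + M)"
            using Cauchy_Schwarz[of "S (g (nk k)) - S f" "S (x k)"] Sx[of k]
              mult_left_mono[OF Sx[of k] norm_ge_zero[of "S (g (nk k)) - S f"]] by linarith
        qed
        have "(\<lambda>k. norm (S (g (nk k)) - S f) * (1 + M)) \<longlonglongrightarrow> norm (S f - S f) * (1 + M)"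
          by (intro tendsto_intros g2)
        thus "(\<lambda>k. norm (S (g (nk k)) - S f) * (1 + M)) \<longlonglongrightarrow> 0" by simp
      qed
      have "(\<lambda>k. cinner (A f) (x k)) \<longlonglongrightarrow> cinner (A f) w" using w unfolding weakly_to_def by blast
      moreover have "(\<lambda>k. lk k * cinner (g (nk k)) (x k) - cinner (S (g (nk k)) - S f) (S (x k)))
          \<longlonglongrightarrow> complex_of_real t * cinner f w - 0"
        by (rule tendsto_diff[OF tendsto_mult[OF lk cinner_strong_weak[OF g1 w xn]] z])
      ultimately show "cinner (A f) w = complex_of_real t * cinner f w" unfolding eq by (simp add: LIMSEQ_unique)
    qed
  qed
qed

theorem proposition3p1:
  fixes D :: "'h::{complex_inner, complete_space} set"
    and A :: "'h \<Rightarrow> 'h"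
    and L :: "nat \<Rightarrow> 'h set"
    and An :: "nat \<Rightarrow> 'h \<Rightarrow> 'h"
  assumes sep: "separable_space TYPE('h)"
    and infdim: "\<not> cfinite_dim (UNIV :: 'h set)"
    and sa: "selfadjoint D A"
    and gal: "(op_regular D A L \<and> An = galerkin_op A L) \<or>
              (\<exists>DS S. nonneg_op D A \<and> is_op_sqrt D A DS S \<and> op_regular DS S L \<and>
                      An = galerkin_form_op S L)"
  shows "closed (lim_spectrum L An) \<and> closed (lim_ess_spectrum L An) \<and>
         ess_spectrum D A \<subseteq> complex_of_real ` lim_ess_spectrum L An \<and>
         complex_of_real ` lim_disc_spectrum L An \<subseteq> disc_spectrum D A"
proof -
  have fr: "gframe D A L An"
    using gal
  proof (elim disjE exE conjE)
    assume "op_regular D A L" "An = galerkin_op A L"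
    thus ?thesis using gframe_A[OF sa sep] by simp
  next
    fix DS S assume "is_op_sqrt D A DS S" "op_regular DS S L" "An = galerkin_form_op S L"
    thus ?thesis using gframe_S[OF sa sep] by simp
  qed
  interpret gframe D A L An by (rule fr)
  show ?thesis using closed_lim_spectrum closed_lim_ess_spectrum[OF sep] ess_sub disc_sub by blast
qed

end
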